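(* Consider SONATA for time-varying digraphs with step-size $\alpha\in(0,1]$ under Assumptions (A), (B'), (C), (E). Let $\epsilon_{opt}>0$ satisfy $a(\alpha):=(1-\frac\alpha2)\tilde\mu_{\min}+\frac{D^\ell_{\min}}2\alpha-\frac12\epsilon_{opt}>0$, and let $\sigma(\alpha)=1-\alpha\frac{a(\alpha)}{D_{\max}^2/\mu+a(\alpha)}$, $\eta(\alpha)=\frac{\frac{\alpha}{2\epsilon_{opt}}\frac{D_{\max}^2}\mu+\frac\alpha\mu a(\alpha)}{D_{\max}^2/\mu+a(\alpha)}$. Then for all $\nu\ge0$, $$p_\phi^{\nu+1}\le\sigma(\alpha)p_\phi^\nu+\eta(\alpha)\,\phi_{ub}\big(8L_{\max}^2\|x_{\phi,\perp}^\nu\|^2+2\|y_{\phi,\perp}^\nu\|^2\big).$$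
   Context: Problem (P): minimize $U=F+G$ over $\mathcal K$, $F=\frac1m\sum_{i=1}^mf_i$. (A): $\mathcal K\subseteq\mathbb R^d$ nonempty closed convex; $f_i$ twice differentiable convex on open $\mathcal O\supseteq\mathcal K$; $\mu I\preceq\nabla^2F\preceq LI$ on $\mathcal K$ ($\mu>0$, $L<\infty$); $G$ convex on $\mathcal K$; $U^\star$ optimal value. $\nabla^2f_i\preceq L_iI$ on $\mathcal K$, $L_{\max}=\max L_i$. (B'): digraphs $\mathcal G^\nu=(\{1,\dots,m\},\mathcal E^\nu)$; there is an integer $B>0$ with the graph with edge set $\bigcup_{t=\nu B}^{(\nu+1)B-1}\mathcal E^t$ strongly connected for all $\nu\ge0$. (E): some $c_\ell>0$ with $c^\nu_{ii}\ge c_\ell$, $c^\nu_{ij}\ge c_\ell$ if $(j,i)\in\mathcal E^\nu$ and $c^\nu_{ij}=0$ otherwise, and $\mathbf1^\top C^\nu=\mathbf1^\top$ for all $\nu$. (C): $\tilde f_i:\mathcal O\times\mathcal O\to\mathbb R$ $C^2$, $\nabla\tilde f_i(x;x)=\nabla f_i(x)$, $\nabla\tilde f_i(\cdot;x)$ $\tilde L_i$-Lipschitz, $\tilde f_i(\cdot;x)$ $\tilde\mu_i$-strongly convex on $\mathcal K$ for all $x\in\mathcal K$; constants $D_i^\ell\le D_i^u$ with $D_i^\ell I\preceq\nabla^2\tilde f_i(x;y)-\nabla^2F(x)\preceq D_i^uI$ on $\mathcal K\times\mathcal K$; $D_i=\max\{|D_i^\ell|,|D_i^u|\}$, $\tilde\mu_{\min}=\min\tilde\mu_i$,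 $D^\ell_{\min}=\min D_i^\ell$, $D_{\max}=\max D_i$. Algorithm: $x_i^0\in\mathcal K$, $y_i^0=\nabla f_i(x_i^0)$, $\phi_i^0=1$; $\hat x_i^\nu=\arg\min_{x_i\in\mathcal K}\tilde f_i(x_i;x_i^\nu)+(y_i^\nu-\nabla f_i(x_i^\nu))^\top(x_i-x_i^\nu)+G(x_i)$; $x_i^{\nu+1/2}=x_i^\nu+\alpha(\hat x_i^\nu-x_i^\nu)$; $\phi_i^{\nu+1}=\sum_jc^\nu_{ij}\phi_j^\nu$; $x_i^{\nu+1}=\frac1{\phi_i^{\nu+1}}\sum_jc^\nu_{ij}\phi_j^\nu x_j^{\nu+1/2}$; $y_i^{\nu+1}=\frac1{\phi_i^{\nu+1}}\sum_jc^\nu_{ij}(\phi_j^\nu y_j^\nu+\nabla f_j(x_j^{\nu+1})-\nabla f_j(x_j^\nu))$. Notation: $p_\phi^\nu=\sum_i\phi_i^\nu(U(x_i^\nu)-U^\star)$; $\phi_{ub}=m-c_\ell^{2(m-1)B}$; $x^\nu,y^\nu$ stack local vectors; $x_{\phi,\perp}^\nu=x^\nu-\mathbf1_m\otimes\frac1m\sum_i\phi_i^\nu x_i^\nu$, $y_{\phi,\perp}^\nu=y^\nu-\mathbf1_m\otimes\frac1m\sum_i\phi_i^\nu y_i^\nu$. *)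

theory Defs
  imports "HOL-Analysis.Analysis"
begin

definition strongly_convex_on :: "'a::real_normed_vector set \<Rightarrow> ('a \<Rightarrow> real) \<Rightarrow> real \<Rightarrow> bool" where
  "strongly_convex_on S g mu \<longleftrightarrow>
     (\<forall>x\<in>S. \<forall>y\<in>S. \<forall>t::real. 0 \<le> t \<and> t \<le> 1 \<longrightarrow>
        g ((1 - t) *\<^sub>R x + t *\<^sub>R y) \<le> (1 - t) * g x + t * g y - mu / 2 * t * (1 - t) * (norm (x - y))\<^sup>2)"

definition C2_on :: "'b::euclidean_space set \<Rightarrow> ('b \<Rightarrow> real) \<Rightarrow> bool" where
  "C2_on S g \<longleftrightarrow>
     (\<exists>(g1 :: 'b \<Rightarrow> 'b \<Rightarrow>\<^sub>L real) (g2 :: 'b \<Rightarrow> 'b \<Rightarrow>\<^sub>L ('b \<Rightarrow>\<^sub>L real)).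
        (\<forall>p\<in>S. (g has_derivative blinfun_apply (g1 p)) (at p)
              \<and> (g1 has_derivative blinfun_apply (g2 p)) (at p))
        \<and> continuous_on S g2)"

text \<open>Digraph with vertex set {..<m} and edge set Ed is strongly connected.
  An edge (j,i) is an arc from j to i.\<close>
definition strongly_connected_dg :: "nat \<Rightarrow> (nat \<times> nat) set \<Rightarrow> bool" where
  "strongly_connected_dg m Ed \<longleftrightarrow>
     (\<forall>i<m. \<forall>j<m. (i, j) \<in> (Ed \<inter> ({..<m} \<times> {..<m}))\<^sup>*)"

end

theory Submission
  imports Defs
begin


lemma line_deriv:
  fixes g :: "'a::real_inner \<Rightarrow> real"
  assumes "(g has_derivative (\<lambda>h. G \<bullet> h)) (at (a + t *\<^sub>R d))"
  shows "((\<lambda>t. g (a + t *\<^sub>R d)) has_real_derivative (G \<bullet> d)) (at t)"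
proof -
  have l: "((\<lambda>t. a + t *\<^sub>R d) has_derivative (\<lambda>h. h *\<^sub>R d)) (at t)"
    by (auto intro!: derivative_eq_intros)
  have "((\<lambda>t. g (a + t *\<^sub>R d)) has_derivative (\<lambda>h. G \<bullet> (h *\<^sub>R d))) (at t)"
    using has_derivative_compose[OF l assms] by (simp add: o_def)
  moreover have "(\<lambda>h. G \<bullet> (h *\<^sub>R d)) = (*) (G \<bullet> d)" by (auto simp: fun_eq_iff)
  ultimately show ?thesis unfolding has_field_derivative_def by simp
qed

lemma line_deriv2:
  fixes gr :: "'a::real_inner \<Rightarrow> 'a"
  assumes "(gr has_derivative H) (at (a + t *\<^sub>R d))"
  shows "((\<lambda>t. gr (a + t *\<^sub>R d) \<bullet> d) has_real_derivative (H d \<bullet> d)) (at t)"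
proof -
  have l: "((\<lambda>t. a + t *\<^sub>R d) has_derivative (\<lambda>h. h *\<^sub>R d)) (at t)"
    by (auto intro!: derivative_eq_intros)
  have c: "((\<lambda>t. gr (a + t *\<^sub>R d)) has_derivative (\<lambda>h. H (h *\<^sub>R d))) (at t)"
    using has_derivative_compose[OF l assms] by (simp add: o_def)
  have lin: "linear H" using assms has_derivative_linear by blast
  have "((\<lambda>t. gr (a + t *\<^sub>R d) \<bullet> d) has_derivative (\<lambda>h. H (h *\<^sub>R d) \<bullet> d)) (at t)"
    by (rule has_derivative_inner_left[OF c])
  moreover have "(\<lambda>h. H (h *\<^sub>R d) \<bullet> d) = (\<lambda>h. (H d \<bullet> d) * h)"
    using lin by (auto simp: linear_scale mult.commute)
  ultimately show ?thesis unfolding has_field_derivative_def by simp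
qed

lemma taylor_upper:
  fixes g :: "'a::real_inner \<Rightarrow> real" and gr :: "'a \<Rightarrow> 'a" and H :: "'a \<Rightarrow> 'a \<Rightarrow> 'a"
  assumes dg: "\<And>t. 0 \<le> t \<Longrightarrow> t \<le> 1 \<Longrightarrow> (g has_derivative (\<lambda>h. gr (a + t *\<^sub>R d) \<bullet> h)) (at (a + t *\<^sub>R d))"
    and dgr: "\<And>t. 0 \<le> t \<Longrightarrow> t \<le> 1 \<Longrightarrow> (gr has_derivative H (a + t *\<^sub>R d)) (at (a + t *\<^sub>R d))"
    and hb: "\<And>t. 0 \<le> t \<Longrightarrow> t \<le> 1 \<Longrightarrow> H (a + t *\<^sub>R d) d \<bullet> d \<le> c"
    and s: "0 \<le> s" "s \<le> 1"
  shows "g (a + s *\<^sub>R d) \<le> g a + s * (gr a \<bullet> d) + c * s\<^sup>2 / 2"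
proof -
  define q' where "q' t = gr (a + t *\<^sub>R d) \<bullet> d - gr a \<bullet> d - c * t" for t
  define q where "q t = g (a + t *\<^sub>R d) - g a - t * (gr a \<bullet> d) - c * t\<^sup>2 / 2" for t
  have dq': "(q' has_real_derivative (H (a + t *\<^sub>R d) d \<bullet> d - c)) (at t)" if "0 \<le> t" "t \<le> 1" for t
    unfolding q'_def using line_deriv2[OF dgr[OF that]]
    by (auto intro!: derivative_eq_intros)
  have q'0: "q' 0 = 0" by (simp add: q'_def)
  have q'le: "q' t \<le> 0" if "0 \<le> t" "t \<le> 1" for t
  proof -
    have "q' t \<le> q' 0"
      by (rule DERIV_nonpos_imp_nonincreasing[OF that(1)]) (use dq' hb that in force)
    then show ?thesis using q'0 by simp
  qed
  have dq: "(q has_real_derivative q' t) (at t)" if "0 \<le> t" "t \<le> 1" for t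
  proof -
    have "((\<lambda>t. g (a + t *\<^sub>R d)) has_real_derivative (gr (a + t *\<^sub>R d) \<bullet> d)) (at t)"
      by (rule line_deriv[OF dg[OF that]])
    then have "(q has_real_derivative (gr (a + t *\<^sub>R d) \<bullet> d - 0 - 1 * (gr a \<bullet> d) - c * (2 * t) / 2)) (at t)"
      unfolding q_def by (auto intro!: derivative_eq_intros)
    then show ?thesis by (simp add: q'_def)
  qed
  have "q s \<le> q 0"
    by (rule DERIV_nonpos_imp_nonincreasing[OF s(1)]) (use dq q'le s in force)
  then show ?thesis by (simp add: q_def)
qed




lemma hess_approx:
  fixes g :: "'a::real_inner \<Rightarrow> real"
  assumes S: "open S" "z \<in> S"
   and dg: "\<And>u. u \<in> S \<Longrightarrow> (g has_derivative (\<lambda>h. gr u \<bullet> h)) (at u)"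
   and dH: "(gr has_derivative H) (at z)"
   and e: "e > 0"
  shows "\<exists>\<delta>>0. \<forall>t. 0 < t \<and> t < \<delta> \<longrightarrow>
     \<bar>g (z + t *\<^sub>R h + t *\<^sub>R k) - g (z + t *\<^sub>R h) - g (z + t *\<^sub>R k) + g z - t\<^sup>2 * (H k \<bullet> h)\<bar> \<le> e * t\<^sup>2"
proof -
  obtain r where r: "r > 0" "ball z r \<subseteq> S" using S openE by blast
  define C where "C = (2 * norm h + norm k) * norm h + 1"
  have C: "C > 0" unfolding C_def
    using mult_nonneg_nonneg[of "2 * norm h + norm k" "norm h"] norm_ge_zero[of h] norm_ge_zero[of k] by linarith
  define e' where "e' = e / C"
  have e': "e' > 0" using e C by (simp add: e'_def)
  have lin: "linear H" using dH has_derivative_linear by blast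
  obtain d0 where d0: "d0 > 0" "\<And>y. norm (y - z) < d0 \<Longrightarrow> norm (gr y - gr z - H (y - z)) \<le> e' * norm (y - z)"
    using dH e' unfolding has_derivative_at_alt by meson
  define N where "N = norm h + norm k + 1"
  have N: "N > 0" unfolding N_def using norm_ge_zero[of h] norm_ge_zero[of k] by linarith
  define \<delta> where "\<delta> = min d0 r / N"
  have \<delta>: "\<delta> > 0" using d0 r N by (simp add: \<delta>_def)
  show ?thesis
  proof (intro exI[of _ \<delta>] conjI allI impI)
    show "\<delta> > 0" by fact
    fix t :: real assume t: "0 < t \<and> t < \<delta>"
    have smallnorm: "norm (s *\<^sub>R h + t *\<^sub>R k) < min d0 r" if "0 \<le> s" "s \<le> t" for s
    proof -
      have "norm (s *\<^sub>R h + t *\<^sub>R k) \<le> s * norm h + t * norm k"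
        using norm_triangle_ineq[of "s *\<^sub>R h" "t *\<^sub>R k"] that t by simp
      also have "\<dots> \<le> t * (norm h + norm k)" using that by (simp add: algebra_simps mult_right_mono)
      also have "\<dots> < t * N" using t by (simp add: N_def)
      also have "\<dots> < \<delta> * N" using t N by simp
      also have "\<dots> = min d0 r" using N by (simp add: \<delta>_def)
      finally show ?thesis .
    qed
    have smallnorm2: "norm (s *\<^sub>R h) < min d0 r" if "0 \<le> s" "s \<le> t" for s
    proof -
      have "norm (s *\<^sub>R h) \<le> t * (norm h + norm k)" using that by (simp add: mult_right_mono add_increasing2 mult_nonneg_nonneg[of t "norm k"] order_trans[OF mult_right_mono[of s t "norm h"]] algebra_simps)
      also have "\<dots> < t * N" using t by (simp add: N_def)
      also have "\<dots> < \<delta> * N" using t N by simp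
      also have "\<dots> = min d0 r" using N by (simp add: \<delta>_def)
      finally show ?thesis .
    qed
    have inS1: "z + t *\<^sub>R k + s *\<^sub>R h \<in> S" if "0 \<le> s" "s \<le> t" for s
    proof -
      have "dist z (z + t *\<^sub>R k + s *\<^sub>R h) < r" using smallnorm[OF that]
        by (simp add: dist_norm algebra_simps norm_minus_commute)
      then show ?thesis using r(2) by auto
    qed
    have inS2: "z + s *\<^sub>R h \<in> S" if "0 \<le> s" "s \<le> t" for s
    proof -
      have "dist z (z + s *\<^sub>R h) < r" using smallnorm2[OF that]
        by (simp add: dist_norm algebra_simps norm_minus_commute)
      then show ?thesis using r(2) by auto
    qed
    define \<rho> where "\<rho> s = g (z + t *\<^sub>R k + s *\<^sub>R h) - g (z + s *\<^sub>R h)" for s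
    define \<rho>' where "\<rho>' s = gr (z + t *\<^sub>R k + s *\<^sub>R h) \<bullet> h - gr (z + s *\<^sub>R h) \<bullet> h" for s
    have der: "DERIV \<rho> s :> \<rho>' s" if "0 \<le> s" "s \<le> t" for s
      unfolding \<rho>_def \<rho>'_def
      by (intro derivative_intros line_deriv dg inS1 inS2 that)
    obtain \<xi> where xi: "0 < \<xi>" "\<xi> < t" "\<rho> t - \<rho> 0 = (t - 0) * \<rho>' \<xi>"
      using MVT2[of 0 t \<rho> \<rho>'] der t by auto
    define u1 where "u1 = \<xi> *\<^sub>R h + t *\<^sub>R k"
    define u2 where "u2 = \<xi> *\<^sub>R h"
    have nu1: "norm u1 < d0" using smallnorm[of \<xi>] xi unfolding u1_def by simp
    have nu2: "norm u2 < d0" using smallnorm2[of \<xi>] xi unfolding u2_def by simp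
    have b1: "norm (gr (z + u1) - gr z - H u1) \<le> e' * norm u1" using d0(2)[of "z + u1"] nu1 by simp
    have b2: "norm (gr (z + u2) - gr z - H u2) \<le> e' * norm u2" using d0(2)[of "z + u2"] nu2 by simp
    have Hlin: "H u1 - H u2 = t *\<^sub>R H k" unfolding u1_def u2_def using lin by (simp add: linear_add linear_scale)
    have eq: "\<rho>' \<xi> - t * (H k \<bullet> h) = (gr (z + u1) - gr z - H u1) \<bullet> h - (gr (z + u2) - gr z - H u2) \<bullet> h"
    proof -
      have "(gr (z + u1) - gr z - H u1) \<bullet> h - (gr (z + u2) - gr z - H u2) \<bullet> h
          = gr (z + u1) \<bullet> h - gr (z + u2) \<bullet> h - (H u1 - H u2) \<bullet> h"
        by (simp add: inner_diff_left)
      also have "\<dots> = \<rho>' \<xi> - t * (H k \<bullet> h)" using Hlin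
        by (simp add: \<rho>'_def u1_def u2_def algebra_simps)
      finally show ?thesis by simp
    qed
    have nu1': "norm u1 \<le> t * (norm h + norm k)"
    proof -
      have "norm u1 \<le> \<xi> * norm h + t * norm k" unfolding u1_def
        using norm_triangle_ineq[of "\<xi> *\<^sub>R h" "t *\<^sub>R k"] xi by simp
      also have "\<dots> \<le> t * (norm h + norm k)" using xi by (simp add: algebra_simps mult_right_mono)
      finally show ?thesis .
    qed
    have nu2': "norm u2 \<le> t * norm h" unfolding u2_def using xi by (simp add: mult_right_mono)
    have "\<bar>\<rho>' \<xi> - t * (H k \<bullet> h)\<bar> \<le> norm (gr (z + u1) - gr z - H u1) * norm h + norm (gr (z + u2) - gr z - H u2) * norm h"
      unfolding eq by (rule order_trans[OF abs_triangle_ineq4]) (intro add_mono Cauchy_Schwarz_ineq2[THEN order_trans] order_refl)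
    also have "\<dots> \<le> e' * (t * (norm h + norm k)) * norm h + e' * (t * norm h) * norm h"
      using b1 b2 nu1' nu2' e' by (intro add_mono mult_right_mono) (auto intro: order_trans mult_left_mono)
    also have "\<dots> = e' * t * ((2 * norm h + norm k) * norm h)" by (simp add: algebra_simps)
    also have "\<dots> \<le> e' * t * C" using e' t by (intro mult_left_mono) (auto simp: C_def)
    also have "\<dots> = e * t" using C by (simp add: e'_def)
    finally have B: "\<bar>\<rho>' \<xi> - t * (H k \<bullet> h)\<bar> \<le> e * t" .
    have "g (z + t *\<^sub>R h + t *\<^sub>R k) - g (z + t *\<^sub>R h) - g (z + t *\<^sub>R k) + g z - t\<^sup>2 * (H k \<bullet> h)
        = t * (\<rho>' \<xi> - t * (H k \<bullet> h))"
      using xi(3) by (simp add: \<rho>_def power2_eq_square algebra_simps)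
    then have "\<bar>g (z + t *\<^sub>R h + t *\<^sub>R k) - g (z + t *\<^sub>R h) - g (z + t *\<^sub>R k) + g z - t\<^sup>2 * (H k \<bullet> h)\<bar>
        = t * \<bar>\<rho>' \<xi> - t * (H k \<bullet> h)\<bar>" using t by (simp add: abs_mult)
    also have "\<dots> \<le> t * (e * t)" using B t by (simp add: mult_left_mono)
    finally show "\<bar>g (z + t *\<^sub>R h + t *\<^sub>R k) - g (z + t *\<^sub>R h) - g (z + t *\<^sub>R k) + g z - t\<^sup>2 * (H k \<bullet> h)\<bar> \<le> e * t\<^sup>2"
      by (simp add: power2_eq_square algebra_simps)
  qed
qed

lemma hess_sym:
  fixes g :: "'a::real_inner \<Rightarrow> real"
  assumes S: "open S" "z \<in> S"
   and dg: "\<And>u. u \<in> S \<Longrightarrow> (g has_derivative (\<lambda>h. gr u \<bullet> h)) (at u)"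
   and dH: "(gr has_derivative H) (at z)"
  shows "H k \<bullet> h = H h \<bullet> k"
proof (rule ccontr)
  assume ne: "H k \<bullet> h \<noteq> H h \<bullet> k"
  define e where "e = \<bar>H k \<bullet> h - H h \<bullet> k\<bar> / 4"
  have e: "e > 0" using ne by (simp add: e_def)
  obtain d1 where d1: "d1 > 0" "\<forall>t. 0 < t \<and> t < d1 \<longrightarrow>
     \<bar>g (z + t *\<^sub>R h + t *\<^sub>R k) - g (z + t *\<^sub>R h) - g (z + t *\<^sub>R k) + g z - t\<^sup>2 * (H k \<bullet> h)\<bar> \<le> e * t\<^sup>2"
    using hess_approx[OF S dg dH e, of h k] by blast
  obtain d2 where d2: "d2 > 0" "\<forall>t. 0 < t \<and> t < d2 \<longrightarrow>
     \<bar>g (z + t *\<^sub>R k + t *\<^sub>R h) - g (z + t *\<^sub>R k) - g (z + t *\<^sub>R h) + g z - t\<^sup>2 * (H h \<bullet> k)\<bar> \<le> e * t\<^sup>2"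
    using hess_approx[OF S dg dH e, of k h] by blast
  define t where "t = min d1 d2 / 2"
  have t: "0 < t" "t < d1" "t < d2" using d1 d2 by (auto simp: t_def)
  have A: "\<bar>g (z + t *\<^sub>R h + t *\<^sub>R k) - g (z + t *\<^sub>R h) - g (z + t *\<^sub>R k) + g z - t\<^sup>2 * (H k \<bullet> h)\<bar> \<le> e * t\<^sup>2"
    using d1 t by blast
  have B: "\<bar>g (z + t *\<^sub>R h + t *\<^sub>R k) - g (z + t *\<^sub>R h) - g (z + t *\<^sub>R k) + g z - t\<^sup>2 * (H h \<bullet> k)\<bar> \<le> e * t\<^sup>2"
  proof -
    have "z + t *\<^sub>R k + t *\<^sub>R h = z + t *\<^sub>R h + t *\<^sub>R k" by (simp add: algebra_simps)
    then show ?thesis using d2(2)[rule_format, of t] t by (simp add: algebra_simps)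
  qed
  have "\<bar>t\<^sup>2 * (H k \<bullet> h) - t\<^sup>2 * (H h \<bullet> k)\<bar> \<le> 2 * e * t\<^sup>2" using A B by linarith
  then have "t\<^sup>2 * \<bar>H k \<bullet> h - H h \<bullet> k\<bar> \<le> t\<^sup>2 * (2 * e)"
  proof -
    have "t\<^sup>2 * (H k \<bullet> h) - t\<^sup>2 * (H h \<bullet> k) = t\<^sup>2 * (H k \<bullet> h - H h \<bullet> k)" by (simp add: algebra_simps)
    then show ?thesis using \<open>\<bar>t\<^sup>2 * (H k \<bullet> h) - t\<^sup>2 * (H h \<bullet> k)\<bar> \<le> 2 * e * t\<^sup>2\<close>
      by (simp only: abs_mult abs_power2 mult.commute mult.left_commute)
  qed
  then have "\<bar>H k \<bullet> h - H h \<bullet> k\<bar> \<le> 2 * e" using t by (simp add: mult_le_cancel_left)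
  then show False using e by (simp add: e_def)
qed




lemma sym_bilin_bound:
  fixes M :: "'a::real_inner \<Rightarrow> 'a"
  assumes lin: "linear M" and sym: "\<And>u v. M u \<bullet> v = M v \<bullet> u"
    and Q: "\<And>h. \<bar>M h \<bullet> h\<bar> \<le> D * (norm h)\<^sup>2"
  shows "\<bar>M v \<bullet> w\<bar> \<le> D / 2 * ((norm v)\<^sup>2 + (norm w)\<^sup>2)"
proof -
  have "M (v + w) \<bullet> (v + w) - M (v - w) \<bullet> (v - w) = 4 * (M v \<bullet> w)"
    using lin sym[of v w] by (simp add: linear_add linear_diff inner_add_left inner_add_right inner_diff_left inner_diff_right algebra_simps)
  then have "4 * \<bar>M v \<bullet> w\<bar> \<le> \<bar>M (v + w) \<bullet> (v + w)\<bar> + \<bar>M (v - w) \<bullet> (v - w)\<bar>" by linarith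
  also have "\<dots> \<le> D * (norm (v + w))\<^sup>2 + D * (norm (v - w))\<^sup>2" using Q by (intro add_mono)
  also have "\<dots> = D * 2 * ((norm v)\<^sup>2 + (norm w)\<^sup>2)"
    by (simp add: power2_norm_eq_inner inner_add_left inner_add_right inner_diff_left inner_diff_right inner_commute algebra_simps)
  finally show ?thesis by simp
qed

lemma sym_norm_bound:
  fixes M :: "'a::real_inner \<Rightarrow> 'a"
  assumes lin: "linear M" and sym: "\<And>u v. M u \<bullet> v = M v \<bullet> u"
    and Q: "\<And>h. \<bar>M h \<bullet> h\<bar> \<le> D * (norm h)\<^sup>2"
  shows "norm (M h) \<le> D * norm h"
proof (cases "M h = 0")
  case True
  show ?thesis
  proof (cases "h = 0")
    case True then show ?thesis using lin by (simp add: linear_0)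
  next
    case False
    have "0 \<le> D * (norm h)\<^sup>2" using Q[of h] by linarith
    then have "0 \<le> D" using False by (simp add: zero_le_mult_iff)
    then show ?thesis using \<open>M h = 0\<close> by simp
  qed
next
  case False
  then have h0: "h \<noteq> 0" using lin linear_0 by metis
  define w where "w = M h"
  have nw: "norm w > 0" using False by (simp add: w_def)
  have nh: "norm h > 0" using h0 by simp
  define a where "a = sqrt (norm w / norm h)"
  have a: "a > 0" using nw nh by (simp add: a_def)
  have a2: "a\<^sup>2 = norm w / norm h" using nw nh by (simp add: a_def)
  have "M (a *\<^sub>R h) \<bullet> ((1 / a) *\<^sub>R w) = M h \<bullet> w" using lin a by (simp add: linear_scale)
  then have "(norm w)\<^sup>2 = M (a *\<^sub>R h) \<bullet> ((1 / a) *\<^sub>R w)" by (simp add: w_def power2_norm_eq_inner)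
  also have "\<dots> \<le> \<bar>M (a *\<^sub>R h) \<bullet> ((1 / a) *\<^sub>R w)\<bar>" by (rule abs_ge_self)
  also have "\<dots> \<le> D / 2 * ((norm (a *\<^sub>R h))\<^sup>2 + (norm ((1 / a) *\<^sub>R w))\<^sup>2)"
    by (rule sym_bilin_bound[OF lin sym Q])
  also have "(norm (a *\<^sub>R h))\<^sup>2 + (norm ((1 / a) *\<^sub>R w))\<^sup>2 = a\<^sup>2 * (norm h)\<^sup>2 + (norm w)\<^sup>2 / a\<^sup>2"
    using a by (simp add: power_mult_distrib power_divide)
  also have "\<dots> = 2 * (norm w * norm h)"
  proof -
    have "a\<^sup>2 * (norm h)\<^sup>2 = norm w * norm h" using a2 nh by (simp add: power2_eq_square)
    moreover have "(norm w)\<^sup>2 / a\<^sup>2 = norm w * norm h" unfolding a2 using nw nh by (simp add: power2_eq_square)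
    ultimately show ?thesis by simp
  qed
  finally have "(norm w)\<^sup>2 \<le> D * (norm w * norm h)" by simp
  then have "norm w * norm w \<le> norm w * (D * norm h)" by (simp add: power2_eq_square algebra_simps)
  then show ?thesis using nw by (simp add: w_def)
qed




lemma deriv_nonneg_right_min:
  fixes \<kappa> :: "real \<Rightarrow> real"
  assumes der: "DERIV \<kappa> 0 :> l" and d: "d > 0" and mn: "\<And>t. 0 < t \<Longrightarrow> t < d \<Longrightarrow> \<kappa> 0 \<le> \<kappa> t"
  shows "0 \<le> l"
proof (rule ccontr)
  assume "\<not> 0 \<le> l"
  then have "l < 0" by simp
  from DERIV_neg_dec_right[OF der this] obtain d' where d': "d' > 0" "\<forall>h>0. h < d' \<longrightarrow> \<kappa> 0 > \<kappa> (0 + h)" by blast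
  define t where "t = min d d' / 2"
  have "0 < t" "t < d" "t < d'" using d d' by (auto simp: t_def)
  then show False using d'(2) mn[of t] by force
qed

lemma line_deriv0:
  fixes g :: "'a::real_inner \<Rightarrow> real"
  assumes "(g has_derivative (\<lambda>h. G \<bullet> h)) (at a)"
  shows "((\<lambda>t. g (a + t *\<^sub>R d)) has_real_derivative (G \<bullet> d)) (at 0)"
  using line_deriv[of g G a 0 d] assms by simp

lemma line_deriv2_0:
  fixes gr :: "'a::real_inner \<Rightarrow> 'a"
  assumes "(gr has_derivative H) (at a)"
  shows "((\<lambda>t. gr (a + t *\<^sub>R d) \<bullet> d) has_real_derivative (H d \<bullet> d)) (at 0)"
  using line_deriv2[of gr H a 0 d] assms by simp

lemma convex_tangent:
  fixes f :: "'a::real_inner \<Rightarrow> real"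
  assumes cv: "convex_on S f" and x: "x \<in> S" and y: "y \<in> S"
    and df: "(f has_derivative (\<lambda>h. G \<bullet> h)) (at x)"
  shows "f x + G \<bullet> (y - x) \<le> f y"
proof -
  define \<kappa> where "\<kappa> t = f x + t * (f y - f x) - f (x + t *\<^sub>R (y - x))" for t
  have der: "DERIV \<kappa> 0 :> (f y - f x) - G \<bullet> (y - x)"
    unfolding \<kappa>_def using line_deriv0[OF df, of "y - x"]
    by (auto intro!: derivative_eq_intros)
  have "0 \<le> (f y - f x) - G \<bullet> (y - x)"
  proof (rule deriv_nonneg_right_min[OF der, of 1])
    fix t :: real assume t: "0 < t" "t < 1"
    have "x + t *\<^sub>R (y - x) = (1 - t) *\<^sub>R x + t *\<^sub>R y" by (simp add: algebra_simps)
    then have "f (x + t *\<^sub>R (y - x)) \<le> (1 - t) * f x + t * f y"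
      using convex_onD[OF cv, of t x y] t x y by simp
    then show "\<kappa> 0 \<le> \<kappa> t" by (simp add: \<kappa>_def algebra_simps)
  qed simp
  then show ?thesis by simp
qed

lemma convex_hess_psd:
  fixes f :: "'a::real_inner \<Rightarrow> real"
  assumes S: "open S" "z \<in> S"
    and cv: "\<And>T. T \<subseteq> S \<Longrightarrow> convex T \<Longrightarrow> convex_on T f"
    and df: "\<And>u. u \<in> S \<Longrightarrow> (f has_derivative (\<lambda>h. gr u \<bullet> h)) (at u)"
    and dH: "(gr has_derivative H) (at z)"
  shows "0 \<le> H h \<bullet> h"
proof -
  obtain r where r: "r > 0" "ball z r \<subseteq> S" using S openE by blast
  have cvb: "convex_on (ball z r) f" using cv r by simp
  define d where "d = r / (norm h + 1)"
  have nh1: "norm h + 1 > 0" using norm_ge_zero[of h] by linarith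
  have d: "d > 0" using r nh1 by (simp add: d_def)
  have "0 \<le> H h \<bullet> h"
  proof (rule deriv_nonneg_right_min[OF line_deriv2_0[OF dH, of h] d])
    fix t :: real assume t: "0 < t" "t < d"
    have "norm (t *\<^sub>R h) < r"
    proof -
      have "norm (t *\<^sub>R h) = t * norm h" using t by simp
      also have "\<dots> \<le> t * (norm h + 1)" using t by simp
      also have "\<dots> < d * (norm h + 1)" using t by (intro mult_strict_right_mono nh1)
      also have "\<dots> = r" using nh1 by (simp add: d_def)
      finally show ?thesis .
    qed
    then have inb: "z + t *\<^sub>R h \<in> ball z r" by (simp add: dist_norm)
    have zb: "z \<in> ball z r" using r by simp
    have "f z + gr z \<bullet> ((z + t *\<^sub>R h) - z) \<le> f (z + t *\<^sub>R h)"
      by (rule convex_tangent[OF cvb zb inb df]) (use S in auto)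
    moreover have "f (z + t *\<^sub>R h) + gr (z + t *\<^sub>R h) \<bullet> (z - (z + t *\<^sub>R h)) \<le> f z"
      by (rule convex_tangent[OF cvb inb zb df]) (use inb r in auto)
    ultimately have "t * (gr z \<bullet> h) \<le> t * (gr (z + t *\<^sub>R h) \<bullet> h)" by (simp add: inner_diff_right)
    then show "gr (z + 0 *\<^sub>R h) \<bullet> h \<le> gr (z + t *\<^sub>R h) \<bullet> h" using t by simp
  qed
  then show ?thesis .
qed




lemma strongly_convex_add_affine:
  fixes K :: "'a::real_inner set"
  assumes "strongly_convex_on K f mu"
  shows "strongly_convex_on K (\<lambda>v. f v + b \<bullet> (v - c)) mu"
  unfolding strongly_convex_on_def
proof (intro ballI allI impI)
  fix x y and t :: real assume xy: "x \<in> K" "y \<in> K" and t: "0 \<le> t \<and> t \<le> 1"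
  have "f ((1 - t) *\<^sub>R x + t *\<^sub>R y) \<le> (1 - t) * f x + t * f y - mu / 2 * t * (1 - t) * (norm (x - y))\<^sup>2"
    using assms xy t unfolding strongly_convex_on_def by blast
  moreover have "b \<bullet> ((1 - t) *\<^sub>R x + t *\<^sub>R y - c) = (1 - t) * (b \<bullet> (x - c)) + t * (b \<bullet> (y - c))"
    by (simp add: inner_diff_right inner_add_right algebra_simps)
  ultimately show "f ((1 - t) *\<^sub>R x + t *\<^sub>R y) + b \<bullet> ((1 - t) *\<^sub>R x + t *\<^sub>R y - c)
      \<le> (1 - t) * (f x + b \<bullet> (x - c)) + t * (f y + b \<bullet> (y - c)) - mu / 2 * t * (1 - t) * (norm (x - y))\<^sup>2"
    by (simp add: algebra_simps)
qed

lemma lim_small_t: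
  fixes c P :: real
  assumes "c \<ge> 0" and "\<And>t. 0 < t \<Longrightarrow> t \<le> 1 \<Longrightarrow> c * (1 - t) \<le> P"
  shows "c \<le> P"
proof (rule ccontr)
  assume "\<not> c \<le> P"
  then have cP: "P < c" by simp
  then have c: "c > 0" using assms(1) assms(2)[of 1] by simp
  define t where "t = min 1 ((c - P) / (2 * c))"
  have t: "0 < t" "t \<le> 1" using cP c by (auto simp: t_def)
  have "t \<le> (c - P) / (2 * c)" by (simp add: t_def)
  then have "c * t \<le> (c - P) / 2" using c by (simp add: field_simps)
  then have "c * (1 - t) > P" using cP by (simp add: algebra_simps)
  then show False using assms(2)[OF t] by simp
qed




lemma final_alg:
  fixes L \<Delta> E u P a alpha eps mu :: real
  assumes P: "P \<ge> 0" and a: "a > 0" and mu: "mu > 0" and eps: "eps > 0"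
    and A: "L \<le> \<Delta> - alpha * a * u\<^sup>2 + alpha * E / (2 * eps)"
    and B: "L \<le> (1 - alpha) * \<Delta> + alpha * (P * u\<^sup>2 + E / mu)"
  shows "L \<le> (1 - alpha * (a / (P + a))) * \<Delta> + ((alpha / (2 * eps) * P + alpha / mu * a) / (P + a)) * E"
proof -
  have Pa: "P + a > 0" using P a by simp
  have "P * L \<le> P * (\<Delta> - alpha * a * u\<^sup>2 + alpha * E / (2 * eps))" using A P by (rule mult_left_mono)
  moreover have "a * L \<le> a * ((1 - alpha) * \<Delta> + alpha * (P * u\<^sup>2 + E / mu))" using B a by (intro mult_left_mono) auto
  ultimately have "(P + a) * L \<le> P * (\<Delta> - alpha * a * u\<^sup>2 + alpha * E / (2 * eps)) + a * ((1 - alpha) * \<Delta> + alpha * (P * u\<^sup>2 + E / mu))"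
    by (simp add: distrib_right)
  also have "\<dots> = (P + a) * \<Delta> - alpha * a * \<Delta> + (alpha / (2 * eps) * P + alpha / mu * a) * E"
    by (simp add: algebra_simps)
  also have "\<dots> = (P + a) * ((1 - alpha * (a / (P + a))) * \<Delta> + ((alpha / (2 * eps) * P + alpha / mu * a) / (P + a)) * E)"
  proof -
    have e1: "(P + a) * ((1 - alpha * (a / (P + a))) * \<Delta>) = (P + a) * \<Delta> - alpha * a * \<Delta>"
      using Pa by (simp add: field_simps)
    have e2: "(P + a) * (((alpha / (2 * eps) * P + alpha / mu * a) / (P + a)) * E) = (alpha / (2 * eps) * P + alpha / mu * a) * E"
      using Pa by simp
    show ?thesis using e1 e2 by (simp add: distrib_left)
  qed
  finally show ?thesis using Pa by (simp add: mult_le_cancel_left_pos)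
qed

lemma young2:
  fixes s u eps :: real
  assumes "eps > 0"
  shows "s * u \<le> eps / 2 * u\<^sup>2 + s\<^sup>2 / (2 * eps)"
proof -
  have "0 \<le> (eps * u - s)\<^sup>2" by simp
  then have "2 * eps * (s * u) \<le> eps * (eps * u\<^sup>2) + s\<^sup>2" by (simp add: power2_eq_square algebra_simps)
  moreover have "2 * eps * (eps / 2 * u\<^sup>2 + s\<^sup>2 / (2 * eps)) = eps * (eps * u\<^sup>2) + s\<^sup>2"
    using assms by (simp add: field_simps)
  ultimately have "2 * eps * (s * u) \<le> 2 * eps * (eps / 2 * u\<^sup>2 + s\<^sup>2 / (2 * eps))" by simp
  then show ?thesis using assms by (simp add: mult_le_cancel_left_pos)
qed

lemma quad_lower:
  fixes p w mu :: real
  assumes "mu > 0"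
  shows "- (p\<^sup>2 / (2 * mu)) \<le> mu / 2 * w\<^sup>2 - p * w"
proof -
  have "0 \<le> (mu * w - p)\<^sup>2" by simp
  then have "0 \<le> (mu * w - p)\<^sup>2 / (2 * mu)" using assms by simp
  also have "(mu * w - p)\<^sup>2 / (2 * mu) = mu / 2 * w\<^sup>2 - p * w + p\<^sup>2 / (2 * mu)"
    using assms by (simp add: power2_eq_square field_simps)
  finally show ?thesis by simp
qed




lemma agent_step:
  fixes K Oo :: "'a::euclidean_space set" and F G ph :: "'a \<Rightarrow> real" and gF gph :: "'a \<Rightarrow> 'a"
    and HF Hph :: "'a \<Rightarrow> 'a \<Rightarrow> 'a"
  assumes Oo: "open Oo" and Kc: "convex K" and KO: "K \<subseteq> Oo" and x: "x \<in> K" and xh: "xh \<in> K"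
   and dF: "\<And>u. u \<in> Oo \<Longrightarrow> (F has_derivative (\<lambda>h. gF u \<bullet> h)) (at u)"
   and dgF: "\<And>u. u \<in> Oo \<Longrightarrow> (gF has_derivative HF u) (at u)"
   and dph: "\<And>u. u \<in> Oo \<Longrightarrow> (ph has_derivative (\<lambda>h. gph u \<bullet> h)) (at u)"
   and dgph: "\<And>u. u \<in> Oo \<Longrightarrow> (gph has_derivative Hph u) (at u)"
   and Fcv: "convex_on K F" and Gcv: "convex_on K G"
   and Fstr: "\<And>z h. z \<in> K \<Longrightarrow> mu * (norm h)\<^sup>2 \<le> HF z h \<bullet> h"
   and Dlo: "\<And>z h. z \<in> K \<Longrightarrow> Dl * (norm h)\<^sup>2 \<le> (Hph z h - HF z h) \<bullet> h"
   and Dab: "\<And>z h. z \<in> K \<Longrightarrow> \<bar>(Hph z h - HF z h) \<bullet> h\<bar> \<le> Dm * (norm h)\<^sup>2"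
   and phs: "strongly_convex_on K ph mut"
   and mn: "\<And>z. z \<in> K \<Longrightarrow> ph xh + G xh \<le> ph z + G z"
   and gx: "gph x = y"
   and mut: "mut \<ge> 0"
   and coef: "a + eps / 2 \<le> (1 - alpha / 2) * mut + Dl / 2 * alpha"
   and alpha: "0 < alpha" "alpha \<le> 1" and eps: "eps > 0" and a: "a > 0" and mu: "mu > 0" and Dm: "Dm \<ge> 0"
   and Ust: "Ust = Inf ((\<lambda>z. F z + G z) ` K)"
  shows "F (x + alpha *\<^sub>R (xh - x)) + G (x + alpha *\<^sub>R (xh - x)) - Ust
    \<le> (1 - alpha * (a / (Dm\<^sup>2 / mu + a))) * (F x + G x - Ust)
       + ((alpha / (2 * eps) * (Dm\<^sup>2 / mu) + alpha / mu * a) / (Dm\<^sup>2 / mu + a)) * (norm (gF x - y))\<^sup>2"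
proof -
  define d where "d = xh - x"
  define u where "u = norm d"
  define s where "s = gF x - y"
  define xa where "xa = x + alpha *\<^sub>R d"
  define U where "U z = F z + G z" for z
  have segK: "p + t *\<^sub>R (q - p) \<in> K" if "p \<in> K" "q \<in> K" "0 \<le> t" "t \<le> 1" for p q t
  proof -
    have "p + t *\<^sub>R (q - p) = (1 - t) *\<^sub>R p + t *\<^sub>R q" by (simp add: algebra_simps)
    then show ?thesis using convexD[OF Kc that(1,2), of "1 - t" t] that by simp
  qed
  have xaK: "xa \<in> K" unfolding xa_def d_def using segK[OF x xh] alpha by simp
  have xa_eq: "xa = (1 - alpha) *\<^sub>R x + alpha *\<^sub>R xh" by (simp add: xa_def d_def algebra_simps)
  define M where "M = ph x + G x - ph xh - G xh"
  have growth: "mut / 2 * u\<^sup>2 \<le> M"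
  proof (rule lim_small_t)
    show "0 \<le> mut / 2 * u\<^sup>2" using mut by simp
    fix t :: real assume t: "0 < t" "t \<le> 1"
    define zt where "zt = (1 - t) *\<^sub>R xh + t *\<^sub>R x"
    have ztK: "zt \<in> K" unfolding zt_def using convexD[OF Kc xh x, of "1 - t" t] t by simp
    have "ph zt \<le> (1 - t) * ph xh + t * ph x - mut / 2 * t * (1 - t) * (norm (xh - x))\<^sup>2"
      using phs xh x t unfolding strongly_convex_on_def zt_def by auto
    moreover have "G zt \<le> (1 - t) * G xh + t * G x"
      using convex_onD[OF Gcv, of t xh x] t xh x by (simp add: zt_def)
    moreover have "ph xh + G xh \<le> ph zt + G zt" by (rule mn[OF ztK])
    moreover have "norm (xh - x) = u" by (simp add: u_def d_def)
    ultimately have "t * (mut / 2 * u\<^sup>2 * (1 - t)) \<le> t * M"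
      by (simp add: M_def algebra_simps)
    then show "mut / 2 * u\<^sup>2 * (1 - t) \<le> M" using t by (simp add: mult_le_cancel_left_pos)
  qed
  have subg: "G xh - gph xh \<bullet> (z - xh) \<le> G z" if z: "z \<in> K" for z
  proof -
    define \<kappa> where "\<kappa> t = ph (xh + t *\<^sub>R (z - xh)) + t * (G z - G xh)" for t
    have der: "DERIV \<kappa> 0 :> gph xh \<bullet> (z - xh) + (G z - G xh)"
      unfolding \<kappa>_def using line_deriv0[OF dph[of xh], of "z - xh"] xh KO
      by (auto intro!: derivative_eq_intros)
    have "0 \<le> gph xh \<bullet> (z - xh) + (G z - G xh)"
    proof (rule deriv_nonneg_right_min[OF der, of 1])
      fix t :: real assume t: "0 < t" "t < 1"
      have pK: "xh + t *\<^sub>R (z - xh) \<in> K" using segK[OF xh z] t by simp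
      have "xh + t *\<^sub>R (z - xh) = (1 - t) *\<^sub>R xh + t *\<^sub>R z" by (simp add: algebra_simps)
      then have "G (xh + t *\<^sub>R (z - xh)) \<le> (1 - t) * G xh + t * G z"
        using convex_onD[OF Gcv, of t xh z] t xh z by simp
      moreover have "ph xh + G xh \<le> ph (xh + t *\<^sub>R (z - xh)) + G (xh + t *\<^sub>R (z - xh))" by (rule mn[OF pK])
      ultimately show "\<kappa> 0 \<le> \<kappa> t" by (simp add: \<kappa>_def algebra_simps)
    qed simp
    then show ?thesis by simp
  qed
  have psi: "F xa - ph xa \<le> F x - ph x + alpha * ((gF x - gph x) \<bullet> d) + (- Dl * u\<^sup>2) * alpha\<^sup>2 / 2"
  proof -
    have "(\<lambda>v. F v - ph v) (x + alpha *\<^sub>R d) \<le> (\<lambda>v. F v - ph v) x + alpha * ((\<lambda>v. gF v - gph v) x \<bullet> d) + (- Dl * u\<^sup>2) * alpha\<^sup>2 / 2"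
    proof (rule taylor_upper[where H = "\<lambda>v h. HF v h - Hph v h"])
      fix t :: real assume t: "0 \<le> t" "t \<le> 1"
      have pO: "x + t *\<^sub>R d \<in> Oo" using segK[OF x xh t] KO by (auto simp: d_def)
      have pK: "x + t *\<^sub>R d \<in> K" using segK[OF x xh t] by (auto simp: d_def)
      show "((\<lambda>v. F v - ph v) has_derivative (\<lambda>h. (gF (x + t *\<^sub>R d) - gph (x + t *\<^sub>R d)) \<bullet> h)) (at (x + t *\<^sub>R d))"
        using has_derivative_diff[OF dF[OF pO] dph[OF pO]] by (simp add: inner_diff_left)
      show "((\<lambda>v. gF v - gph v) has_derivative (\<lambda>h. HF (x + t *\<^sub>R d) h - Hph (x + t *\<^sub>R d) h)) (at (x + t *\<^sub>R d))"
        using has_derivative_diff[OF dgF[OF pO] dgph[OF pO]] by simp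
      show "(HF (x + t *\<^sub>R d) d - Hph (x + t *\<^sub>R d) d) \<bullet> d \<le> - Dl * u\<^sup>2"
        using Dlo[OF pK, of d] by (simp add: u_def inner_diff_left)
    qed (use alpha in auto)
    then show ?thesis by (simp add: xa_def)
  qed
  have phb: "ph xa \<le> (1 - alpha) * ph x + alpha * ph xh - mut / 2 * alpha * (1 - alpha) * u\<^sup>2"
  proof -
    have "norm (x - xh) = u" by (simp add: u_def d_def norm_minus_commute)
    then show ?thesis using phs x xh alpha unfolding strongly_convex_on_def xa_eq by auto
  qed
  have Gb: "G xa \<le> (1 - alpha) * G x + alpha * G xh"
    unfolding xa_eq using convex_onD[OF Gcv, of alpha x xh] alpha x xh by simp
  have desc0: "U xa \<le> U x - alpha * M + alpha * (s \<bullet> d) - (Dl * alpha\<^sup>2 / 2 + mut / 2 * alpha * (1 - alpha)) * u\<^sup>2"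
    using psi phb Gb gx by (simp add: U_def M_def s_def algebra_simps power2_eq_square)
  have "alpha * (mut / 2 * u\<^sup>2) \<le> alpha * M" using growth alpha by simp
  moreover have "alpha * ((1 - alpha / 2) * mut + Dl / 2 * alpha) * u\<^sup>2
      = alpha * (mut / 2 * u\<^sup>2) + (Dl * alpha\<^sup>2 / 2 + mut / 2 * alpha * (1 - alpha)) * u\<^sup>2"
    by (simp add: field_simps power2_eq_square)
  ultimately have desc1: "U xa \<le> U x + alpha * (s \<bullet> d) - alpha * ((1 - alpha / 2) * mut + Dl / 2 * alpha) * u\<^sup>2"
    using desc0 by linarith
  have "alpha * (a + eps / 2) * u\<^sup>2 \<le> alpha * ((1 - alpha / 2) * mut + Dl / 2 * alpha) * u\<^sup>2"
    using coef alpha by (intro mult_right_mono mult_left_mono) auto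
  with desc1 have desc2: "U xa \<le> U x + alpha * (s \<bullet> d) - alpha * (a + eps / 2) * u\<^sup>2" by linarith
  have "s \<bullet> d \<le> norm s * u" unfolding u_def using Cauchy_Schwarz_ineq2[of s d] by (simp add: abs_le_iff)
  also have "\<dots> \<le> eps / 2 * u\<^sup>2 + (norm s)\<^sup>2 / (2 * eps)" by (rule young2[OF eps])
  finally have "alpha * (s \<bullet> d) \<le> alpha * (eps / 2 * u\<^sup>2 + (norm s)\<^sup>2 / (2 * eps))" using alpha by simp
  with desc2 have A: "U xa - Ust \<le> (U x - Ust) - alpha * a * u\<^sup>2 + alpha * (norm s)\<^sup>2 / (2 * eps)"
    by (simp add: algebra_simps)
  define v where "v = gF xh - gph xh"
  have Flow: "F xh + gF xh \<bullet> (z - xh) + mu / 2 * (norm (z - xh))\<^sup>2 \<le> F z" if z: "z \<in> K" for z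
  proof -
    have "(\<lambda>v. - F v) (xh + 1 *\<^sub>R (z - xh)) \<le> (\<lambda>v. - F v) xh + 1 * ((\<lambda>v. - gF v) xh \<bullet> (z - xh)) + (- mu * (norm (z - xh))\<^sup>2) * 1\<^sup>2 / 2"
    proof (rule taylor_upper[where H = "\<lambda>v h. - HF v h"])
      fix t :: real assume t: "0 \<le> t" "t \<le> 1"
      have pO: "xh + t *\<^sub>R (z - xh) \<in> Oo" using segK[OF xh z t] KO by auto
      have pK: "xh + t *\<^sub>R (z - xh) \<in> K" using segK[OF xh z t] by auto
      show "((\<lambda>v. - F v) has_derivative (\<lambda>h. - gF (xh + t *\<^sub>R (z - xh)) \<bullet> h)) (at (xh + t *\<^sub>R (z - xh)))"
        using has_derivative_minus[OF dF[OF pO]] by simp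
      show "((\<lambda>v. - gF v) has_derivative (\<lambda>h. - HF (xh + t *\<^sub>R (z - xh)) h)) (at (xh + t *\<^sub>R (z - xh)))"
        using has_derivative_minus[OF dgF[OF pO]] by simp
      show "- HF (xh + t *\<^sub>R (z - xh)) (z - xh) \<bullet> (z - xh) \<le> - mu * (norm (z - xh))\<^sup>2"
        using Fstr[OF pK, of "z - xh"] by simp
    qed auto
    then show ?thesis by simp
  qed
  have Ulow: "U xh - (norm v)\<^sup>2 / (2 * mu) \<le> U z" if z: "z \<in> K" for z
  proof -
    have "U xh + v \<bullet> (z - xh) + mu / 2 * (norm (z - xh))\<^sup>2 \<le> U z"
      using Flow[OF z] subg[OF z] by (simp add: U_def v_def inner_diff_left)
    moreover have "- norm v * norm (z - xh) \<le> v \<bullet> (z - xh)"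
      using Cauchy_Schwarz_ineq2[of v "z - xh"] by (simp add: abs_le_iff)
    moreover have "- ((norm v)\<^sup>2 / (2 * mu)) \<le> mu / 2 * (norm (z - xh))\<^sup>2 - norm v * norm (z - xh)"
      by (rule quad_lower[OF mu])
    ultimately show ?thesis by linarith
  qed
  have Kne: "K \<noteq> {}" using x by auto
  have Ust_ge: "U xh - (norm v)\<^sup>2 / (2 * mu) \<le> Ust"
    unfolding Ust using Kne Ulow by (intro cInf_greatest) (auto simp: U_def)
  have symF: "HF z k \<bullet> h = HF z h \<bullet> k" if "z \<in> K" for z h k
    by (rule hess_sym[OF Oo _ dF dgF]) (use that KO in auto)
  have symP: "Hph z k \<bullet> h = Hph z h \<bullet> k" if "z \<in> K" for z h k
    by (rule hess_sym[OF Oo _ dph dgph]) (use that KO in auto)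
  have vs: "norm ((gF xh - gph xh) - (gF x - gph x)) \<le> Dm * norm (xh - x)"
  proof (rule differentiable_bound[OF Kc _ _ xh x, where f' = "\<lambda>z h. HF z h - Hph z h"])
    fix z assume z: "z \<in> K"
    have zO: "z \<in> Oo" using z KO by auto
    show "((\<lambda>v. gF v - gph v) has_derivative (\<lambda>h. HF z h - Hph z h)) (at z within K)"
      using has_derivative_diff[OF dgF[OF zO] dgph[OF zO]] by (rule has_derivative_at_withinI)
    have linF: "linear (HF z)" using dgF[OF zO] has_derivative_linear by blast
    have linP: "linear (Hph z)" using dgph[OF zO] has_derivative_linear by blast
    have lin: "linear (\<lambda>h. HF z h - Hph z h)" using linear_compose_sub[OF linF linP] by simp
    have nb: "norm (HF z h - Hph z h) \<le> Dm * norm h" for h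
    proof (rule sym_norm_bound[OF lin])
      fix u v show "(HF z u - Hph z u) \<bullet> v = (HF z v - Hph z v) \<bullet> u"
        using symF[OF z, of v u] symP[OF z, of v u] by (simp add: inner_diff_left)
    next
      fix h have "(HF z h - Hph z h) \<bullet> h = - ((Hph z h - HF z h) \<bullet> h)" by (simp add: inner_diff_left)
      then show "\<bar>(HF z h - Hph z h) \<bullet> h\<bar> \<le> Dm * (norm h)\<^sup>2" using Dab[OF z, of h] by simp
    qed
    show "onorm (\<lambda>h. HF z h - Hph z h) \<le> Dm" by (rule onorm_le) (rule nb)
  qed
  have vnorm: "norm v \<le> norm s + Dm * u"
  proof -
    have "v = s + ((gF xh - gph xh) - (gF x - gph x))" by (simp add: v_def s_def gx)
    then have "norm v \<le> norm s + norm ((gF xh - gph xh) - (gF x - gph x))" using norm_triangle_ineq by metis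
    then show ?thesis using vs by (simp add: u_def d_def)
  qed
  have v2: "(norm v)\<^sup>2 \<le> 2 * (norm s)\<^sup>2 + 2 * (Dm\<^sup>2 * u\<^sup>2)"
  proof -
    have "(norm v)\<^sup>2 \<le> (norm s + Dm * u)\<^sup>2" using vnorm by (simp add: power_mono)
    also have "\<dots> \<le> 2 * (norm s)\<^sup>2 + 2 * (Dm\<^sup>2 * u\<^sup>2)"
      using sum_squares_bound[of "norm s" "Dm * u"] by (simp add: power2_eq_square algebra_simps)
    finally show ?thesis .
  qed
  have Ucv: "convex_on K U" unfolding U_def using convex_on_add[OF Fcv Gcv] by simp
  have Ub: "U xa \<le> (1 - alpha) * U x + alpha * U xh"
    unfolding xa_eq using convex_onD[OF Ucv, of alpha x xh] alpha x xh by simp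
  have "U xh - Ust \<le> (norm v)\<^sup>2 / (2 * mu)" using Ust_ge by simp
  also have "\<dots> \<le> (2 * (norm s)\<^sup>2 + 2 * (Dm\<^sup>2 * u\<^sup>2)) / (2 * mu)" using v2 mu by (simp add: divide_right_mono)
  also have "\<dots> = Dm\<^sup>2 / mu * u\<^sup>2 + (norm s)\<^sup>2 / mu" using mu by (simp add: field_simps)
  finally have "alpha * (U xh - Ust) \<le> alpha * (Dm\<^sup>2 / mu * u\<^sup>2 + (norm s)\<^sup>2 / mu)" using alpha by simp
  with Ub have B: "U xa - Ust \<le> (1 - alpha) * (U x - Ust) + alpha * (Dm\<^sup>2 / mu * u\<^sup>2 + (norm s)\<^sup>2 / mu)"
    by (simp add: algebra_simps)
  have fin: "U xa - Ust \<le> (1 - alpha * (a / (Dm\<^sup>2 / mu + a))) * (U x - Ust)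
       + ((alpha / (2 * eps) * (Dm\<^sup>2 / mu) + alpha / mu * a) / (Dm\<^sup>2 / mu + a)) * (norm s)\<^sup>2"
    by (rule final_alg[OF _ a mu eps A B]) (use mu in simp)
  then show ?thesis by (simp add: U_def xa_def d_def s_def)
qed




lemma rtrancl_first_step:
  assumes "(a, b) \<in> R\<^sup>*" "b \<noteq> a"
  shows "\<exists>c. (a, c) \<in> R \<and> c \<noteq> a"
  using assms
proof (induction rule: converse_rtrancl_induct)
  case base then show ?case by simp
next
  case (step a a')
  show ?case
  proof (cases "a' = a")
    case True then show ?thesis using step by simp
  next
    case False then show ?thesis using step by blast
  qed
qed

lemma phi_bound:
  fixes m B :: nat and C :: "nat \<Rightarrow> nat \<Rightarrow> nat \<Rightarrow> real" and phi :: "nat \<Rightarrow> nat \<Rightarrow> real"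
    and E :: "nat \<Rightarrow> (nat \<times> nat) set" and cl :: real
  assumes m2: "m \<ge> 2" and B_pos: "B > 0"
    and B_conn: "\<And>\<nu>. strongly_connected_dg m (\<Union>t\<in>{\<nu> * B ..< (\<nu> + 1) * B}. E t)"
    and cl_pos: "cl > 0" and cl1: "cl \<le> 1"
    and Cnn: "\<And>\<nu> i j. i < m \<Longrightarrow> j < m \<Longrightarrow> C \<nu> i j \<ge> 0"
    and C_diag: "\<And>\<nu> i. i < m \<Longrightarrow> C \<nu> i i \<ge> cl"
    and C_edge: "\<And>\<nu> i j. i < m \<Longrightarrow> j < m \<Longrightarrow> (j, i) \<in> E \<nu> \<Longrightarrow> C \<nu> i j \<ge> cl"
    and phi0: "\<And>i. i < m \<Longrightarrow> phi 0 i = 1"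
    and phi_step: "\<And>\<nu> i. i < m \<Longrightarrow> phi (Suc \<nu>) i = (\<Sum>j<m. C \<nu> i j * phi \<nu> j)"
    and phi_pos: "\<And>\<nu> i. i < m \<Longrightarrow> phi \<nu> i > 0"
    and phi_sum: "\<And>\<nu>. (\<Sum>i<m. phi \<nu> i) = real m"
    and j: "j < m"
  shows "phi \<nu> j \<le> real m - cl ^ (2 * (m - 1) * B)"
proof -
  have step1: "phi (Suc n) i \<ge> cl * phi n k" if "i < m" "k < m" "k = i \<or> (k, i) \<in> E n" for n i k
  proof -
    have "C n i k * phi n k \<le> (\<Sum>j<m. C n i j * phi n j)"
      by (rule member_le_sum[of k "{..<m}" "\<lambda>j. C n i j * phi n j"])
        (use that Cnn[of i _ n] phi_pos[of _ n] in \<open>auto intro!: mult_nonneg_nonneg simp: less_imp_le\<close>)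
    moreover have "cl * phi n k \<le> C n i k * phi n k"
      using that C_diag C_edge phi_pos[of k n] by (intro mult_right_mono) auto
    ultimately show ?thesis using phi_step[OF that(1)] by simp
  qed
  have step2: "phi (n + t) i \<ge> cl ^ t * phi n i" if "i < m" for n t i
  proof (induction t)
    case 0 then show ?case by simp
  next
    case (Suc t)
    have "cl ^ Suc t * phi n i = cl * (cl ^ t * phi n i)" by simp
    also have "\<dots> \<le> cl * phi (n + t) i" using Suc cl_pos by (intro mult_left_mono) auto
    also have "\<dots> \<le> phi (Suc (n + t)) i" using step1[OF that that] by simp
    finally show ?case by simp
  qed
  have step2': "phi n' i \<ge> cl ^ (n' - n) * phi n i" if "i < m" "n \<le> n'" for n n' i
    using step2[OF that(1), where n=n and t="n' - n"] that by simp
  have powle: "cl ^ (2 * B) \<le> cl ^ k" if "k \<le> 2 * B" for k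
    using power_decreasing[OF that, of cl] cl_pos cl1 by simp
  have step3: "\<exists>i. i < m \<and> i \<noteq> j \<and> phi \<nu> i \<ge> cl ^ (2 * B)"
  proof (cases "\<nu> < B")
    case True
    define i where "i = (if j = 0 then 1 else 0::nat)"
    have i: "i < m" "i \<noteq> j" using m2 by (auto simp: i_def)
    have "phi \<nu> i \<ge> cl ^ (\<nu> - 0) * phi 0 i" by (rule step2'[OF i(1)]) simp
    then have "phi \<nu> i \<ge> cl ^ \<nu>" using phi0[OF i(1)] by simp
    moreover have "cl ^ \<nu> \<ge> cl ^ (2 * B)" using True by (intro powle) simp
    ultimately show ?thesis using i by force
  next
    case False
    define q where "q = \<nu> div B"
    have "0 < q" using False B_pos unfolding q_def by (subst div_greater_zero_iff) simp
    then have q1: "q \<ge> 1" by simp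
    define s where "s = (q - 1) * B"
    have qB: "q * B \<le> \<nu>" unfolding q_def using div_mult_mod_eq[of \<nu> B] by linarith
    have qB2: "\<nu> < (q + 1) * B"
    proof -
      have e: "q * B + \<nu> mod B = \<nu>" unfolding q_def by (rule div_mult_mod_eq)
      have "\<nu> mod B < B" using B_pos by simp
      moreover have "(q + 1) * B = q * B + B" by simp
      ultimately show ?thesis using e by linarith
    qed
    have sB: "s + B = q * B" using q1 by (cases q) (auto simp: s_def)
    have s_le: "s + B \<le> \<nu>" using sB qB by simp
    have s_gap: "\<nu> - s \<le> 2 * B" using qB2 sB by simp
    have "\<exists>k<m. phi s k \<ge> 1"
    proof (rule ccontr)
      assume "\<not> (\<exists>k<m. phi s k \<ge> 1)"
      then have "\<forall>k<m. phi s k < 1" by (simp add: not_le)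
      then have "(\<Sum>i<m. phi s i) < (\<Sum>i<m. 1)" using m2 by (intro sum_strict_mono) (auto simp: lessThan_empty_iff)
      then show False using phi_sum[of s] by simp
    qed
    then obtain k where k: "k < m" "phi s k \<ge> 1" by blast
    show ?thesis
    proof (cases "k = j")
      case False
      have "phi \<nu> k \<ge> cl ^ (\<nu> - s) * phi s k" by (rule step2'[OF k(1)]) (use s_le in simp)
      moreover have "cl ^ (\<nu> - s) * phi s k \<ge> cl ^ (\<nu> - s)" using k(2) cl_pos by (simp add: mult_le_cancel_left1)
      moreover have "cl ^ (\<nu> - s) \<ge> cl ^ (2 * B)" by (rule powle[OF s_gap])
      ultimately show ?thesis using k(1) False by force
    next
      case True
      define i0 where "i0 = (if j = 0 then 1 else 0::nat)"
      have i0: "i0 < m" "i0 \<noteq> j" using m2 by (auto simp: i0_def)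
      define R where "R = (\<Union>t\<in>{(q - 1) * B ..< (q - 1 + 1) * B}. E t) \<inter> ({..<m} \<times> {..<m})"
      have "(j, i0) \<in> R\<^sup>*" unfolding R_def
        using B_conn[of "q - 1", unfolded strongly_connected_dg_def, rule_format, OF j i0(1)] .
      from rtrancl_first_step[OF this i0(2)] obtain i' where i': "(j, i') \<in> R" "i' \<noteq> j" by blast
      have qq: "(q - 1 + 1) * B = s + B" using sB q1 by simp
      obtain t where t0: "t \<in> {(q - 1) * B ..< (q - 1 + 1) * B}" "(j, i') \<in> E t" and t3: "i' < m"
        using i'(1) unfolding R_def by (auto simp only: Int_iff UN_iff mem_Times_iff fst_conv snd_conv lessThan_iff)
      have t: "t \<in> {s ..< s + B}" "(j, i') \<in> E t" "i' < m"
        using t0 t3 qq unfolding s_def by auto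
      have "phi t j \<ge> cl ^ (t - s) * phi s j" by (rule step2'[OF j]) (use t in simp)
      moreover have "cl ^ (t - s) \<le> cl ^ (t - s) * phi s j" using k(2) True cl_pos
        by (simp add: mult_le_cancel_left1)
      ultimately have ptj: "phi t j \<ge> cl ^ (t - s)" by linarith
      have "phi (Suc t) i' \<ge> cl * phi t j" by (rule step1[OF t(3) j]) (use t in simp)
      moreover have "cl * phi t j \<ge> cl * cl ^ (t - s)" using ptj cl_pos by simp
      ultimately have p1: "phi (Suc t) i' \<ge> cl ^ (Suc t - s)" using t(1) by (simp add: Suc_diff_le)
      have "phi \<nu> i' \<ge> cl ^ (\<nu> - Suc t) * phi (Suc t) i'" by (rule step2'[OF t(3)]) (use t s_le in simp)
      moreover have "cl ^ (\<nu> - Suc t) * phi (Suc t) i' \<ge> cl ^ (\<nu> - Suc t) * cl ^ (Suc t - s)"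
        using p1 cl_pos by (intro mult_left_mono) auto
      moreover have "cl ^ (\<nu> - Suc t) * cl ^ (Suc t - s) = cl ^ (\<nu> - s)"
        using t(1) s_le by (simp add: power_add[symmetric])
      moreover have "cl ^ (\<nu> - s) \<ge> cl ^ (2 * B)" by (rule powle[OF s_gap])
      ultimately have "phi \<nu> i' \<ge> cl ^ (2 * B)" by linarith
      then show ?thesis using t(3) i'(2) by blast
    qed
  qed
  then obtain i where i: "i < m" "i \<noteq> j" "phi \<nu> i \<ge> cl ^ (2 * B)" by blast
  have "phi \<nu> j + phi \<nu> i \<le> (\<Sum>k<m. phi \<nu> k)"
  proof -
    have "(\<Sum>k\<in>{j, i}. phi \<nu> k) \<le> (\<Sum>k<m. phi \<nu> k)"
      by (rule sum_mono2) (use i j phi_pos in \<open>auto intro: less_imp_le\<close>)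
    then show ?thesis using i(2) by simp
  qed
  moreover have "cl ^ (2 * (m - 1) * B) \<le> cl ^ (2 * B)"
  proof -
    have "1 \<le> m - 1" using m2 by simp
    then have "2 * B * 1 \<le> 2 * B * (m - 1)" by (rule mult_left_mono) simp
    then have "2 * B \<le> 2 * (m - 1) * B" by (simp add: algebra_simps)
    then show ?thesis using power_decreasing[of "2 * B" "2 * (m - 1) * B" cl] cl_pos cl1 by simp
  qed
  ultimately show ?thesis using phi_sum[of \<nu>] i(3) by linarith
qed




lemma sq_sum_le:
  fixes a b :: real
  shows "(a + b)\<^sup>2 \<le> 2 * a\<^sup>2 + 2 * b\<^sup>2"
  using sum_squares_bound[of a b] by (simp add: power2_eq_square algebra_simps)

lemma norm_sq_sum_le:
  fixes a b :: "'a::real_normed_vector"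
  shows "(norm (a + b))\<^sup>2 \<le> 2 * (norm a)\<^sup>2 + 2 * (norm b)\<^sup>2"
proof -
  have "(norm (a + b))\<^sup>2 \<le> (norm a + norm b)\<^sup>2" by (simp add: norm_triangle_ineq power_mono)
  also have "\<dots> \<le> 2 * (norm a)\<^sup>2 + 2 * (norm b)\<^sup>2" by (rule sq_sum_le)
  finally show ?thesis .
qed

lemma avg_sq_le:
  fixes w :: "nat \<Rightarrow> 'a::real_normed_vector"
  assumes m: "m > 0"
  shows "(norm ((1 / real m) *\<^sub>R (\<Sum>i<m. w i)))\<^sup>2 \<le> (1 / real m) * (\<Sum>i<m. (norm (w i))\<^sup>2)"
proof -
  have "norm ((1 / real m) *\<^sub>R (\<Sum>i<m. w i)) \<le> (1 / real m) * (\<Sum>i<m. norm (w i))"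
    using norm_sum[of w "{..<m}"] by (simp add: divide_right_mono)
  then have "(norm ((1 / real m) *\<^sub>R (\<Sum>i<m. w i)))\<^sup>2 \<le> ((1 / real m) * (\<Sum>i<m. norm (w i)))\<^sup>2"
    by (simp add: power_mono)
  also have "\<dots> = (\<Sum>i<m. norm (w i) * 1)\<^sup>2 / (real m)\<^sup>2" by (simp add: power_divide)
  also have "\<dots> \<le> ((\<Sum>i<m. (norm (w i))\<^sup>2) * (\<Sum>i<m. 1\<^sup>2)) / (real m)\<^sup>2"
    by (intro divide_right_mono Cauchy_Schwarz_ineq_sum) simp
  also have "\<dots> = (1 / real m) * (\<Sum>i<m. (norm (w i))\<^sup>2)" using m by (simp add: power2_eq_square)
  finally show ?thesis .
qed

lemma err_sum:
  fixes gf :: "nat \<Rightarrow> 'a::real_inner \<Rightarrow> 'a" and x y :: "nat \<Rightarrow> 'a"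
  assumes m: "m > 0"
    and Lip: "\<And>i j. i < m \<Longrightarrow> j < m \<Longrightarrow> norm (gf i (x j) - gf i (x i)) \<le> Lm * norm (x j - x i)"
    and yb: "yb = (1 / real m) *\<^sub>R (\<Sum>i<m. gf i (x i))"
  shows "(\<Sum>j<m. (norm ((1 / real m) *\<^sub>R (\<Sum>i<m. gf i (x j)) - y j))\<^sup>2)
     \<le> 8 * Lm\<^sup>2 * (\<Sum>i<m. (norm (x i - xb))\<^sup>2) + 2 * (\<Sum>i<m. (norm (y i - yb))\<^sup>2)"
proof -
  define X where "X = (\<Sum>i<m. (norm (x i - xb))\<^sup>2)"
  have each: "(norm ((1 / real m) *\<^sub>R (\<Sum>i<m. gf i (x j)) - y j))\<^sup>2
      \<le> 2 * (norm (y j - yb))\<^sup>2 + (4 * Lm\<^sup>2 * (norm (x j - xb))\<^sup>2 + 4 * Lm\<^sup>2 / real m * X)" if j: "j < m" for j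
  proof -
    have dec: "(1 / real m) *\<^sub>R (\<Sum>i<m. gf i (x j)) - y j
        = (yb - y j) + (1 / real m) *\<^sub>R (\<Sum>i<m. gf i (x j) - gf i (x i))"
      by (simp add: yb sum_subtractf scaleR_diff_right)
    have s1: "(norm ((1 / real m) *\<^sub>R (\<Sum>i<m. gf i (x j)) - y j))\<^sup>2
        \<le> 2 * (norm (yb - y j))\<^sup>2 + 2 * (norm ((1 / real m) *\<^sub>R (\<Sum>i<m. gf i (x j) - gf i (x i))))\<^sup>2"
      unfolding dec by (rule norm_sq_sum_le)
    have s2: "(norm (yb - y j))\<^sup>2 = (norm (y j - yb))\<^sup>2" by (simp add: norm_minus_commute)
    have s3: "(norm ((1 / real m) *\<^sub>R (\<Sum>i<m. gf i (x j) - gf i (x i))))\<^sup>2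
        \<le> (1 / real m) * (\<Sum>i<m. (norm (gf i (x j) - gf i (x i)))\<^sup>2)" by (rule avg_sq_le[OF m])
    have s4: "(\<Sum>i<m. (norm (gf i (x j) - gf i (x i)))\<^sup>2) \<le> (\<Sum>i<m. Lm\<^sup>2 * (2 * (norm (x j - xb))\<^sup>2 + 2 * (norm (x i - xb))\<^sup>2))"
    proof (rule sum_mono)
      fix i assume "i \<in> {..<m}"
      then have i: "i < m" by simp
      have "(norm (gf i (x j) - gf i (x i)))\<^sup>2 \<le> (Lm * norm (x j - x i))\<^sup>2"
        using Lip[OF i j] by (simp add: power_mono)
      also have "\<dots> = Lm\<^sup>2 * (norm ((x j - xb) + (xb - x i)))\<^sup>2" by (simp add: power_mult_distrib)
      also have "\<dots> \<le> Lm\<^sup>2 * (2 * (norm (x j - xb))\<^sup>2 + 2 * (norm (x i - xb))\<^sup>2)"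
        using norm_sq_sum_le[of "x j - xb" "xb - x i"] by (intro mult_left_mono) (auto simp: norm_minus_commute)
      finally show "(norm (gf i (x j) - gf i (x i)))\<^sup>2 \<le> Lm\<^sup>2 * (2 * (norm (x j - xb))\<^sup>2 + 2 * (norm (x i - xb))\<^sup>2)" .
    qed
    have s5: "(\<Sum>i<m. Lm\<^sup>2 * (2 * (norm (x j - xb))\<^sup>2 + 2 * (norm (x i - xb))\<^sup>2))
        = real m * (2 * Lm\<^sup>2 * (norm (x j - xb))\<^sup>2) + 2 * Lm\<^sup>2 * X"
      by (simp add: X_def sum.distrib sum_distrib_left algebra_simps)
    have mpos: "1 / real m \<ge> 0" by simp
    have "(1 / real m) * (\<Sum>i<m. (norm (gf i (x j) - gf i (x i)))\<^sup>2) \<le> (1 / real m) * (real m * (2 * Lm\<^sup>2 * (norm (x j - xb))\<^sup>2) + 2 * Lm\<^sup>2 * X)"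
      using mult_left_mono[OF s4[unfolded s5] mpos] .
    then have "(norm ((1 / real m) *\<^sub>R (\<Sum>i<m. gf i (x j)) - y j))\<^sup>2
        \<le> 2 * (norm (y j - yb))\<^sup>2 + 2 * ((1 / real m) * (real m * (2 * Lm\<^sup>2 * (norm (x j - xb))\<^sup>2) + 2 * Lm\<^sup>2 * X))"
      using s1 s2 s3 by linarith
    also have "\<dots> = 2 * (norm (y j - yb))\<^sup>2 + (4 * Lm\<^sup>2 * (norm (x j - xb))\<^sup>2 + 4 * Lm\<^sup>2 / real m * X)"
      using m by (simp add: field_simps)
    finally show ?thesis .
  qed
  have "(\<Sum>j<m. (norm ((1 / real m) *\<^sub>R (\<Sum>i<m. gf i (x j)) - y j))\<^sup>2)
      \<le> (\<Sum>j<m. 2 * (norm (y j - yb))\<^sup>2 + (4 * Lm\<^sup>2 * (norm (x j - xb))\<^sup>2 + 4 * Lm\<^sup>2 / real m * X))"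
    by (rule sum_mono) (use each in auto)
  also have "\<dots> = 2 * (\<Sum>i<m. (norm (y i - yb))\<^sup>2) + 4 * Lm\<^sup>2 * X + real m * (4 * Lm\<^sup>2 / real m * X)"
    by (simp add: X_def sum.distrib sum_distrib_left)
  also have "\<dots> = 8 * Lm\<^sup>2 * X + 2 * (\<Sum>i<m. (norm (y i - yb))\<^sup>2)" using m by simp
  finally show ?thesis by (simp add: X_def)
qed




lemma convex_on_sum_fun:
  fixes A :: "'a::real_vector set"
  assumes "convex A" and "\<And>i. i \<in> I \<Longrightarrow> convex_on A (f i)"
  shows "convex_on A (\<lambda>z. \<Sum>i\<in>I. f i z)"
proof (rule convex_onI[OF _ assms(1)])
  fix t :: real and x y assume t: "t > 0" "t < 1" and xy: "x \<in> A" "y \<in> A"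
  have "(\<Sum>i\<in>I. f i ((1 - t) *\<^sub>R x + t *\<^sub>R y)) \<le> (\<Sum>i\<in>I. (1 - t) * f i x + t * f i y)"
    by (rule sum_mono) (use convex_onD[OF assms(2)] t xy in auto)
  also have "\<dots> = (1 - t) * (\<Sum>i\<in>I. f i x) + t * (\<Sum>i\<in>I. f i y)"
    by (simp add: sum.distrib sum_distrib_left)
  finally show "(\<Sum>i\<in>I. f i ((1 - t) *\<^sub>R x + t *\<^sub>R y)) \<le> (1 - t) * (\<Sum>i\<in>I. f i x) + t * (\<Sum>i\<in>I. f i y)" .
qed

theorem proposition4p1:
  fixes m :: nat and K Oo :: "'a::euclidean_space set"
    and f :: "nat \<Rightarrow> 'a \<Rightarrow> real" and gf :: "nat \<Rightarrow> 'a \<Rightarrow> 'a" and Hf :: "nat \<Rightarrow> 'a \<Rightarrow> 'a \<Rightarrow> 'a"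
    and mu L :: real and Lf :: "nat \<Rightarrow> real" and G :: "'a \<Rightarrow> real"
    and E :: "nat \<Rightarrow> (nat \<times> nat) set" and B :: nat
    and C :: "nat \<Rightarrow> nat \<Rightarrow> nat \<Rightarrow> real" and cl :: real
    and ft :: "nat \<Rightarrow> 'a \<Rightarrow> 'a \<Rightarrow> real" and gft :: "nat \<Rightarrow> 'a \<Rightarrow> 'a \<Rightarrow> 'a"
    and Hft :: "nat \<Rightarrow> 'a \<Rightarrow> 'a \<Rightarrow> 'a \<Rightarrow> 'a"
    and Lt mut Dl Du :: "nat \<Rightarrow> real"
    and alpha eps :: real
    and x y xhat xhalf :: "nat \<Rightarrow> nat \<Rightarrow> 'a" and phi :: "nat \<Rightarrow> nat \<Rightarrow> real"
    and F U :: "'a \<Rightarrow> real" and HF :: "'a \<Rightarrow> 'a \<Rightarrow> 'a"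
    and Ustar Lmax Dmax mutmin Dlmin a sigma eta phiub :: real
    and Dv :: "nat \<Rightarrow> real" and p :: "nat \<Rightarrow> real" and xperp2 yperp2 :: "nat \<Rightarrow> real"
  defines "F \<equiv> (\<lambda>z. (1 / real m) * (\<Sum>i<m. f i z))"
    and "HF \<equiv> (\<lambda>z h. (1 / real m) *\<^sub>R (\<Sum>i<m. Hf i z h))"
    and "U \<equiv> (\<lambda>z. F z + G z)"
    and "Ustar \<equiv> Inf (U ` K)"
    and "Lmax \<equiv> Max (Lf ` {..<m})"
    and "Dv \<equiv> (\<lambda>i. max \<bar>Dl i\<bar> \<bar>Du i\<bar>)"
    and "mutmin \<equiv> Min (mut ` {..<m})"
    and "Dlmin \<equiv> Min (Dl ` {..<m})"
    and "Dmax \<equiv> Max (Dv ` {..<m})"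
    and "a \<equiv> (1 - alpha / 2) * mutmin + Dlmin / 2 * alpha - eps / 2"
    and "sigma \<equiv> 1 - alpha * (a / (Dmax\<^sup>2 / mu + a))"
    and "eta \<equiv> (alpha / (2 * eps) * (Dmax\<^sup>2 / mu) + alpha / mu * a) / (Dmax\<^sup>2 / mu + a)"
    and "phiub \<equiv> real m - cl ^ (2 * (m - 1) * B)"
    and "p \<equiv> (\<lambda>\<nu>. \<Sum>i<m. phi \<nu> i * (U (x \<nu> i) - Ustar))"
    and "xperp2 \<equiv> (\<lambda>\<nu>. \<Sum>i<m. (norm (x \<nu> i - (1 / real m) *\<^sub>R (\<Sum>j<m. phi \<nu> j *\<^sub>R x \<nu> j)))\<^sup>2)"
    and "yperp2 \<equiv> (\<lambda>\<nu>. \<Sum>i<m. (norm (y \<nu> i - (1 / real m) *\<^sub>R (\<Sum>j<m. phi \<nu> j *\<^sub>R y \<nu> j)))\<^sup>2)"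
  assumes m_pos: "m > 0"
    \<comment> \<open>Assumption (A)\<close>
    and K_ne: "K \<noteq> {}" and K_closed: "closed K" and K_convex: "convex K"
    and O_open: "open Oo" and KO: "K \<subseteq> Oo"
    and f_grad: "\<And>i z. i < m \<Longrightarrow> z \<in> Oo \<Longrightarrow> (f i has_derivative (\<lambda>h. gf i z \<bullet> h)) (at z)"
    and f_hess: "\<And>i z. i < m \<Longrightarrow> z \<in> Oo \<Longrightarrow> (gf i has_derivative Hf i z) (at z)"
    and f_convex: "\<And>i S. i < m \<Longrightarrow> S \<subseteq> Oo \<Longrightarrow> convex S \<Longrightarrow> convex_on S (f i)"
    and mu_pos: "mu > 0"
    and F_hess: "\<And>z h. z \<in> K \<Longrightarrow> mu * (norm h)\<^sup>2 \<le> h \<bullet> HF z h \<and> h \<bullet> HF z h \<le> L * (norm h)\<^sup>2"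
    and G_convex: "convex_on K G"
    and fi_hess: "\<And>i z h. i < m \<Longrightarrow> z \<in> K \<Longrightarrow> h \<bullet> Hf i z h \<le> Lf i * (norm h)\<^sup>2"
    \<comment> \<open>Assumption (B')\<close>
    and E_vert: "\<And>\<nu>. E \<nu> \<subseteq> {..<m} \<times> {..<m}"
    and B_pos: "B > 0"
    and B_conn: "\<And>\<nu>. strongly_connected_dg m (\<Union>t\<in>{\<nu> * B ..< (\<nu> + 1) * B}. E t)"
    \<comment> \<open>Assumption (E)\<close>
    and cl_pos: "cl > 0"
    and C_diag: "\<And>\<nu> i. i < m \<Longrightarrow> C \<nu> i i \<ge> cl"
    and C_edge: "\<And>\<nu> i j. i < m \<Longrightarrow> j < m \<Longrightarrow> (j, i) \<in> E \<nu> \<Longrightarrow> C \<nu> i j \<ge> cl"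
    and C_zero: "\<And>\<nu> i j. i < m \<Longrightarrow> j < m \<Longrightarrow> i \<noteq> j \<Longrightarrow> (j, i) \<notin> E \<nu> \<Longrightarrow> C \<nu> i j = 0"
    and C_colstoch: "\<And>\<nu> j. j < m \<Longrightarrow> (\<Sum>i<m. C \<nu> i j) = 1"
    \<comment> \<open>Assumption (C)\<close>
    and ft_C2: "\<And>i. i < m \<Longrightarrow> C2_on (Oo \<times> Oo) (\<lambda>q. ft i (fst q) (snd q))"
    and ft_grad: "\<And>i z w. i < m \<Longrightarrow> z \<in> Oo \<Longrightarrow> w \<in> Oo \<Longrightarrow>
                    ((\<lambda>v. ft i v w) has_derivative (\<lambda>h. gft i z w \<bullet> h)) (at z)"
    and ft_hess: "\<And>i z w. i < m \<Longrightarrow> z \<in> Oo \<Longrightarrow> w \<in> Oo \<Longrightarrow>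
                    ((\<lambda>v. gft i v w) has_derivative Hft i z w) (at z)"
    and ft_consistent: "\<And>i z. i < m \<Longrightarrow> z \<in> Oo \<Longrightarrow> gft i z z = gf i z"
    and ft_lipschitz: "\<And>i w z1 z2. i < m \<Longrightarrow> w \<in> K \<Longrightarrow> z1 \<in> K \<Longrightarrow> z2 \<in> K \<Longrightarrow>
                    norm (gft i z1 w - gft i z2 w) \<le> Lt i * norm (z1 - z2)"
    and mut_pos: "\<And>i. i < m \<Longrightarrow> mut i > 0"
    and ft_strconv: "\<And>i w. i < m \<Longrightarrow> w \<in> K \<Longrightarrow> strongly_convex_on K (\<lambda>v. ft i v w) (mut i)"
    and D_le: "\<And>i. i < m \<Longrightarrow> Dl i \<le> Du i"
    and D_bounds: "\<And>i z w h. i < m \<Longrightarrow> z \<in> K \<Longrightarrow> w \<in> K \<Longrightarrow>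
                    Dl i * (norm h)\<^sup>2 \<le> h \<bullet> (Hft i z w h - HF z h) \<and> h \<bullet> (Hft i z w h - HF z h) \<le> Du i * (norm h)\<^sup>2"
    \<comment> \<open>Step size and epsilon\<close>
    and alpha_pos: "0 < alpha" and alpha_le1: "alpha \<le> 1"
    and eps_pos: "eps > 0" and a_pos: "a > 0"
    \<comment> \<open>SONATA iterates\<close>
    and x0: "\<And>i. i < m \<Longrightarrow> x 0 i \<in> K"
    and y0: "\<And>i. i < m \<Longrightarrow> y 0 i = gf i (x 0 i)"
    and phi0: "\<And>i. i < m \<Longrightarrow> phi 0 i = 1"
    and xhat_in: "\<And>\<nu> i. i < m \<Longrightarrow> xhat \<nu> i \<in> K"
    and xhat_min: "\<And>\<nu> i z. i < m \<Longrightarrow> z \<in> K \<Longrightarrow>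
        ft i (xhat \<nu> i) (x \<nu> i) + (y \<nu> i - gf i (x \<nu> i)) \<bullet> (xhat \<nu> i - x \<nu> i) + G (xhat \<nu> i)
        \<le> ft i z (x \<nu> i) + (y \<nu> i - gf i (x \<nu> i)) \<bullet> (z - x \<nu> i) + G z"
    and xhalf_def: "\<And>\<nu> i. i < m \<Longrightarrow> xhalf \<nu> i = x \<nu> i + alpha *\<^sub>R (xhat \<nu> i - x \<nu> i)"
    and phi_step: "\<And>\<nu> i. i < m \<Longrightarrow> phi (Suc \<nu>) i = (\<Sum>j<m. C \<nu> i j * phi \<nu> j)"
    and x_step: "\<And>\<nu> i. i < m \<Longrightarrow>
        x (Suc \<nu>) i = (1 / phi (Suc \<nu>) i) *\<^sub>R (\<Sum>j<m. (C \<nu> i j * phi \<nu> j) *\<^sub>R xhalf \<nu> j)"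
    and y_step: "\<And>\<nu> i. i < m \<Longrightarrow>
        y (Suc \<nu>) i = (1 / phi (Suc \<nu>) i) *\<^sub>R
          (\<Sum>j<m. C \<nu> i j *\<^sub>R (phi \<nu> j *\<^sub>R y \<nu> j + gf j (x (Suc \<nu>) j) - gf j (x \<nu> j)))"
  shows "\<forall>\<nu>. p (Suc \<nu>) \<le> sigma * p \<nu> + eta * phiub * (8 * Lmax\<^sup>2 * xperp2 \<nu> + 2 * yperp2 \<nu>)"
proof -
  note F_def = assms(1) and HF_def = assms(2) and U_def = assms(3) and Ustar_def = assms(4)
    and Lmax_def = assms(5) and Dv_def = assms(6) and mutmin_def = assms(7) and Dlmin_def = assms(8)
    and Dmax_def = assms(9) and a_def = assms(10) and sigma_def = assms(11) and eta_def = assms(12)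
    and phiub_def = assms(13) and p_def = assms(14) and xperp2_def = assms(15) and yperp2_def = assms(16)
  define gF where "gF z = (1 / real m) *\<^sub>R (\<Sum>i<m. gf i z)" for z
  have dF: "(F has_derivative (\<lambda>h. gF u \<bullet> h)) (at u)" if u: "u \<in> Oo" for u
  proof -
    have "((\<lambda>z. (1 / real m) * (\<Sum>i<m. f i z)) has_derivative (\<lambda>h. (1 / real m) * (\<Sum>i<m. gf i u \<bullet> h))) (at u)"
      by (intro has_derivative_mult_right has_derivative_sum) (use f_grad u in auto)
    moreover have "(\<lambda>h. (1 / real m) * (\<Sum>i<m. gf i u \<bullet> h)) = (\<lambda>h. gF u \<bullet> h)"
      by (auto simp: gF_def inner_sum_left fun_eq_iff)
    ultimately show ?thesis unfolding F_def by simp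
  qed
  have dgF: "(gF has_derivative HF u) (at u)" if u: "u \<in> Oo" for u
  proof -
    have "((\<lambda>z. (1 / real m) *\<^sub>R (\<Sum>i<m. gf i z)) has_derivative (\<lambda>h. (1 / real m) *\<^sub>R (\<Sum>i<m. Hf i u h))) (at u)"
      by (intro has_derivative_scaleR_right has_derivative_sum) (use f_hess u in auto)
    then show ?thesis unfolding HF_def gF_def[abs_def] by simp
  qed
  have Fcv: "convex_on K F"
  proof -
    have "convex_on K (\<lambda>z. \<Sum>i<m. f i z)"
      by (rule convex_on_sum_fun[OF K_convex]) (use f_convex KO K_convex in auto)
    then have "convex_on K (\<lambda>z. (1 / real m) * (\<Sum>i<m. f i z))" by (intro convex_on_cmul) auto
    then show ?thesis unfolding F_def by simp
  qed
  have Ucv: "convex_on K U" unfolding U_def using convex_on_add[OF Fcv G_convex] by simp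
  have Cnn: "C \<nu> i j \<ge> 0" if "i < m" "j < m" for \<nu> i j
  proof (cases "i = j")
    case True then show ?thesis using C_diag[OF that(1), of \<nu>] cl_pos by simp
  next
    case False
    show ?thesis
    proof (cases "(j, i) \<in> E \<nu>")
      case True then show ?thesis using C_edge[OF that True] cl_pos by simp
    next
      case False then show ?thesis using C_zero[OF that \<open>i \<noteq> j\<close> False] by simp
    qed
  qed
  have cl1: "cl \<le> 1"
  proof -
    have "C 0 0 0 \<le> (\<Sum>i<m. C 0 i 0)"
      by (rule member_le_sum) (use m_pos Cnn in auto)
    then show ?thesis using C_colstoch[OF m_pos, of 0] C_diag[OF m_pos, of 0] by simp
  qed
  have xhalf_K: "xhalf \<nu> j \<in> K" if "j < m" "x \<nu> j \<in> K" for \<nu> j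
  proof -
    have "xhalf \<nu> j = (1 - alpha) *\<^sub>R x \<nu> j + alpha *\<^sub>R xhat \<nu> j"
      using xhalf_def[OF that(1)] by (simp add: algebra_simps)
    then show ?thesis using convexD[OF K_convex that(2) xhat_in[OF that(1)], of "1 - alpha" alpha] alpha_pos alpha_le1 by simp
  qed
  have inv: "(\<forall>i<m. x \<nu> i \<in> K \<and> phi \<nu> i > 0) \<and> (\<Sum>i<m. phi \<nu> i) = real m
      \<and> (\<Sum>i<m. phi \<nu> i *\<^sub>R y \<nu> i) = (\<Sum>i<m. gf i (x \<nu> i))" for \<nu>
  proof (induction \<nu>)
    case 0
    show ?case using x0 phi0 y0 by simp
  next
    case (Suc \<nu>)
    have xK: "\<And>i. i < m \<Longrightarrow> x \<nu> i \<in> K" and pp: "\<And>i. i < m \<Longrightarrow> phi \<nu> i > 0"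
      and ps: "(\<Sum>i<m. phi \<nu> i) = real m" and tr: "(\<Sum>i<m. phi \<nu> i *\<^sub>R y \<nu> i) = (\<Sum>i<m. gf i (x \<nu> i))"
      using Suc by auto
    have nnt: "C \<nu> i j * phi \<nu> j \<ge> 0" if "i < m" "j < m" for i j
      using Cnn[OF that] pp[OF that(2)] by simp
    have pp': "phi (Suc \<nu>) i > 0" if i: "i < m" for i
    proof -
      have "C \<nu> i i * phi \<nu> i \<le> (\<Sum>j<m. C \<nu> i j * phi \<nu> j)"
        by (rule member_le_sum) (use i nnt in auto)
      moreover have "C \<nu> i i * phi \<nu> i > 0" using C_diag[OF i, of \<nu>] cl_pos pp[OF i] by simp
      ultimately show ?thesis using phi_step[OF i] by simp
    qed
    have xK': "x (Suc \<nu>) i \<in> K" if i: "i < m" for i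
    proof -
      have "x (Suc \<nu>) i = (\<Sum>j<m. (C \<nu> i j * phi \<nu> j / phi (Suc \<nu>) i) *\<^sub>R xhalf \<nu> j)"
        using x_step[OF i] by (simp add: scaleR_sum_right)
      moreover have "(\<Sum>j<m. (C \<nu> i j * phi \<nu> j / phi (Suc \<nu>) i) *\<^sub>R xhalf \<nu> j) \<in> K"
      proof (rule convex_sum[OF _ K_convex])
        show "(\<Sum>j<m. C \<nu> i j * phi \<nu> j / phi (Suc \<nu>) i) = 1"
          using phi_step[OF i] pp'[OF i] by (simp add: sum_divide_distrib[symmetric])
      qed (use nnt i pp'[OF i] xhalf_K xK in auto)
      ultimately show ?thesis by simp
    qed
    have ps': "(\<Sum>i<m. phi (Suc \<nu>) i) = real m"
    proof -
      have "(\<Sum>i<m. phi (Suc \<nu>) i) = (\<Sum>i<m. \<Sum>j<m. C \<nu> i j * phi \<nu> j)" using phi_step by simp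
      also have "\<dots> = (\<Sum>j<m. (\<Sum>i<m. C \<nu> i j) * phi \<nu> j)"
        by (subst sum.swap) (simp add: sum_distrib_right)
      also have "\<dots> = (\<Sum>j<m. phi \<nu> j)" using C_colstoch by simp
      finally show ?thesis using ps by simp
    qed
    have tr': "(\<Sum>i<m. phi (Suc \<nu>) i *\<^sub>R y (Suc \<nu>) i) = (\<Sum>i<m. gf i (x (Suc \<nu>) i))"
    proof -
      have "(\<Sum>i<m. phi (Suc \<nu>) i *\<^sub>R y (Suc \<nu>) i)
          = (\<Sum>i<m. \<Sum>j<m. C \<nu> i j *\<^sub>R (phi \<nu> j *\<^sub>R y \<nu> j + gf j (x (Suc \<nu>) j) - gf j (x \<nu> j)))"
      proof (rule sum.cong[OF refl])
        fix i assume "i \<in> {..<m}"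
        then have i: "i < m" by simp
        show "phi (Suc \<nu>) i *\<^sub>R y (Suc \<nu>) i = (\<Sum>j<m. C \<nu> i j *\<^sub>R (phi \<nu> j *\<^sub>R y \<nu> j + gf j (x (Suc \<nu>) j) - gf j (x \<nu> j)))"
          unfolding y_step[OF i] using pp'[OF i] by simp
      qed
      also have "\<dots> = (\<Sum>j<m. (\<Sum>i<m. C \<nu> i j) *\<^sub>R (phi \<nu> j *\<^sub>R y \<nu> j + gf j (x (Suc \<nu>) j) - gf j (x \<nu> j)))"
        by (subst sum.swap) (simp add: scaleR_sum_left)
      also have "\<dots> = (\<Sum>j<m. phi \<nu> j *\<^sub>R y \<nu> j + gf j (x (Suc \<nu>) j) - gf j (x \<nu> j))"
        using C_colstoch by simp
      also have "\<dots> = (\<Sum>i<m. gf i (x (Suc \<nu>) i))"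
        using tr by (simp add: sum.distrib sum_subtractf)
      finally show ?thesis .
    qed
    show ?case using xK' pp' ps' tr' by auto
  qed
  have xK: "x \<nu> i \<in> K" if "i < m" for \<nu> i using inv[of \<nu>] that by auto
  have ppos: "phi \<nu> i > 0" if "i < m" for \<nu> i using inv[of \<nu>] that by auto
  have psum: "(\<Sum>i<m. phi \<nu> i) = real m" for \<nu> using inv[of \<nu>] by auto
  have track: "(\<Sum>i<m. phi \<nu> i *\<^sub>R y \<nu> i) = (\<Sum>i<m. gf i (x \<nu> i))" for \<nu> using inv[of \<nu>] by auto
  have Dv_le: "Dv j \<le> Dmax" if "j < m" for j unfolding Dmax_def by (rule Max_ge) (use that in auto)
  have "0 \<le> Dv 0" unfolding Dv_def by (simp add: le_max_iff_disj)
  then have Dmax_nn: "0 \<le> Dmax" using Dv_le[OF m_pos] by linarith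
  have mut_ge: "mutmin \<le> mut j" if "j < m" for j unfolding mutmin_def by (rule Min_le) (use that in auto)
  have Dl_ge: "Dlmin \<le> Dl j" if "j < m" for j unfolding Dlmin_def by (rule Min_le) (use that in auto)
  have Lf_le: "Lf j \<le> Lmax" if "j < m" for j unfolding Lmax_def by (rule Max_ge) (use that in auto)
  have agent: "U (xhalf \<nu> j) - Ustar \<le> sigma * (U (x \<nu> j) - Ustar) + eta * (norm (gF (x \<nu> j) - y \<nu> j))\<^sup>2"
    if j: "j < m" for \<nu> j
  proof -
    define w where "w = x \<nu> j"
    define c where "c = y \<nu> j - gf j w"
    have wK: "w \<in> K" using xK[OF j] by (simp add: w_def)
    have wO: "w \<in> Oo" using wK KO by auto
    have dph: "((\<lambda>v. ft j v w + c \<bullet> (v - w)) has_derivative (\<lambda>h. (gft j u w + c) \<bullet> h)) (at u)" if u: "u \<in> Oo" for u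
    proof -
      have "((\<lambda>v. ft j v w + c \<bullet> (v - w)) has_derivative (\<lambda>h. gft j u w \<bullet> h + c \<bullet> (h - 0))) (at u)"
        by (intro has_derivative_add has_derivative_inner_right has_derivative_diff has_derivative_ident has_derivative_const ft_grad[OF j u wO])
      then show ?thesis by (simp add: inner_add_left)
    qed
    have dgph: "((\<lambda>v. gft j v w + c) has_derivative Hft j u w) (at u)" if u: "u \<in> Oo" for u
      using has_derivative_add_const[OF ft_hess[OF j u wO], of c] by simp
    have Fstr: "mu * (norm h)\<^sup>2 \<le> HF z h \<bullet> h" if "z \<in> K" for z h
      using F_hess[OF that, of h] by (simp add: inner_commute)
    have Dlo: "Dl j * (norm h)\<^sup>2 \<le> (Hft j z w h - HF z h) \<bullet> h" if "z \<in> K" for z h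
      using D_bounds[OF j that wK, of h] by (simp add: inner_commute)
    have Dab: "\<bar>(Hft j z w h - HF z h) \<bullet> h\<bar> \<le> Dmax * (norm h)\<^sup>2" if z: "z \<in> K" for z h
    proof -
      have b: "Dl j * (norm h)\<^sup>2 \<le> (Hft j z w h - HF z h) \<bullet> h" "(Hft j z w h - HF z h) \<bullet> h \<le> Du j * (norm h)\<^sup>2"
        using D_bounds[OF j z wK, of h] by (simp_all add: inner_commute)
      have "- (Dv j * (norm h)\<^sup>2) \<le> Dl j * (norm h)\<^sup>2"
        by (simp add: Dv_def mult_right_mono[of "- max \<bar>Dl j\<bar> \<bar>Du j\<bar>" "Dl j" "(norm h)\<^sup>2", simplified])
      moreover have "Du j * (norm h)\<^sup>2 \<le> Dv j * (norm h)\<^sup>2"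
        by (intro mult_right_mono) (auto simp: Dv_def)
      moreover have "Dv j * (norm h)\<^sup>2 \<le> Dmax * (norm h)\<^sup>2" using Dv_le[OF j] by (intro mult_right_mono) auto
      ultimately show ?thesis using b by (simp add: abs_le_iff)
    qed
    have phs: "strongly_convex_on K (\<lambda>v. ft j v w + c \<bullet> (v - w)) (mut j)"
      by (rule strongly_convex_add_affine[OF ft_strconv[OF j wK]])
    have mn: "(\<lambda>v. ft j v w + c \<bullet> (v - w)) (xhat \<nu> j) + G (xhat \<nu> j) \<le> (\<lambda>v. ft j v w + c \<bullet> (v - w)) z + G z"
      if "z \<in> K" for z
      using xhat_min[OF j that] by (simp add: w_def c_def)
    have gx: "gft j w w + c = y \<nu> j" using ft_consistent[OF j wO] by (simp add: c_def)
    have coef: "a + eps / 2 \<le> (1 - alpha / 2) * mut j + Dl j / 2 * alpha"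
    proof -
      have "(1 - alpha / 2) * mutmin \<le> (1 - alpha / 2) * mut j" using mut_ge[OF j] alpha_le1 by (intro mult_left_mono) auto
      moreover have "Dlmin / 2 * alpha \<le> Dl j / 2 * alpha" using Dl_ge[OF j] alpha_pos by (intro mult_right_mono) auto
      ultimately show ?thesis unfolding a_def by simp
    qed
    have Ust: "Ustar = Inf ((\<lambda>z. F z + G z) ` K)" unfolding Ustar_def U_def ..
    have "F (w + alpha *\<^sub>R (xhat \<nu> j - w)) + G (w + alpha *\<^sub>R (xhat \<nu> j - w)) - Ustar
      \<le> (1 - alpha * (a / (Dmax\<^sup>2 / mu + a))) * (F w + G w - Ustar)
       + ((alpha / (2 * eps) * (Dmax\<^sup>2 / mu) + alpha / mu * a) / (Dmax\<^sup>2 / mu + a)) * (norm (gF w - y \<nu> j))\<^sup>2"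
      by (rule agent_step[OF O_open K_convex KO wK xhat_in[OF j] dF dgF dph dgph Fcv G_convex Fstr Dlo Dab phs mn gx
            less_imp_le[OF mut_pos[OF j]] coef alpha_pos alpha_le1 eps_pos a_pos mu_pos Dmax_nn Ust])
    then show ?thesis unfolding sigma_def eta_def U_def using xhalf_def[OF j] by (simp add: w_def)
  qed
  have Lip: "norm (gf i b - gf i a) \<le> Lf i * norm (b - a)" if i: "i < m" and a: "a \<in> K" and b: "b \<in> K" for i a b
  proof (rule differentiable_bound[OF K_convex _ _ b a, where f' = "Hf i"])
    fix z assume z: "z \<in> K"
    have zO: "z \<in> Oo" using z KO by auto
    show "(gf i has_derivative Hf i z) (at z within K)" using f_hess[OF i zO] by (rule has_derivative_at_withinI)
    have lin: "linear (Hf i z)" using f_hess[OF i zO] has_derivative_linear by blast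
    have nb: "norm (Hf i z h) \<le> Lf i * norm h" for h
    proof (rule sym_norm_bound[OF lin])
      fix u v show "Hf i z u \<bullet> v = Hf i z v \<bullet> u"
        by (rule hess_sym[OF O_open zO f_grad[OF i] f_hess[OF i zO]])
    next
      fix h
      have "0 \<le> Hf i z h \<bullet> h" by (rule convex_hess_psd[OF O_open zO f_convex[OF i] f_grad[OF i] f_hess[OF i zO]])
      moreover have "Hf i z h \<bullet> h \<le> Lf i * (norm h)\<^sup>2" using fi_hess[OF i z, of h] by (simp add: inner_commute)
      ultimately show "\<bar>Hf i z h \<bullet> h\<bar> \<le> Lf i * (norm h)\<^sup>2" by simp
    qed
    show "onorm (Hf i z) \<le> Lf i" by (rule onorm_le) (rule nb)
  qed
  have eta_nn: "eta \<ge> 0"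
  proof -
    have "Dmax\<^sup>2 / mu + a > 0" using mu_pos a_pos by (simp add: add_nonneg_pos)
    moreover have "alpha / (2 * eps) * (Dmax\<^sup>2 / mu) + alpha / mu * a \<ge> 0"
      using alpha_pos eps_pos mu_pos a_pos by (intro add_nonneg_nonneg mult_nonneg_nonneg) auto
    ultimately show ?thesis unfolding eta_def by simp
  qed
  show ?thesis
  proof
    fix \<nu>
    define e where "e j = (norm (gF (x \<nu> j) - y \<nu> j))\<^sup>2" for j
    define Uh where "Uh j = U (xhalf \<nu> j) - Ustar" for j
    have agg_i: "phi (Suc \<nu>) i * (U (x (Suc \<nu>) i) - Ustar) \<le> (\<Sum>j<m. C \<nu> i j * phi \<nu> j * Uh j)"
      if i: "i < m" for i
    proof -
      define wt where "wt j = C \<nu> i j * phi \<nu> j / phi (Suc \<nu>) i" for j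
      have pp': "phi (Suc \<nu>) i > 0" by (rule ppos[OF i])
      have xe: "x (Suc \<nu>) i = (\<Sum>j<m. wt j *\<^sub>R xhalf \<nu> j)"
        using x_step[OF i] by (simp add: scaleR_sum_right wt_def)
      have wsum: "(\<Sum>j<m. wt j) = 1"
        using phi_step[OF i] pp' by (simp add: wt_def sum_divide_distrib[symmetric])
      have wnn: "wt j \<ge> 0" if "j \<in> {..<m}" for j
        using Cnn[OF i, of j \<nu>] ppos[of j \<nu>] pp' that by (simp add: wt_def)
      have "U (x (Suc \<nu>) i) \<le> (\<Sum>j<m. wt j * U (xhalf \<nu> j))"
        unfolding xe by (rule convex_on_sum[OF _ _ Ucv wsum wnn]) (use m_pos xhalf_K xK in auto)
      then have "phi (Suc \<nu>) i * U (x (Suc \<nu>) i) \<le> phi (Suc \<nu>) i * (\<Sum>j<m. wt j * U (xhalf \<nu> j))"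
        using pp' by simp
      also have "\<dots> = (\<Sum>j<m. C \<nu> i j * phi \<nu> j * U (xhalf \<nu> j))"
        using pp' by (simp add: sum_distrib_left wt_def)
      finally have A: "phi (Suc \<nu>) i * U (x (Suc \<nu>) i) \<le> (\<Sum>j<m. C \<nu> i j * phi \<nu> j * U (xhalf \<nu> j))" .
      have B: "phi (Suc \<nu>) i * Ustar = (\<Sum>j<m. C \<nu> i j * phi \<nu> j * Ustar)"
        using phi_step[OF i] by (simp add: sum_distrib_right)
      show ?thesis using A B by (simp add: Uh_def right_diff_distrib sum_subtractf algebra_simps)
    qed
    have agg: "p (Suc \<nu>) \<le> (\<Sum>j<m. phi \<nu> j * Uh j)"
    proof -
      have "p (Suc \<nu>) = (\<Sum>i<m. phi (Suc \<nu>) i * (U (x (Suc \<nu>) i) - Ustar))" unfolding p_def by simp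
      also have "\<dots> \<le> (\<Sum>i<m. \<Sum>j<m. C \<nu> i j * phi \<nu> j * Uh j)" by (rule sum_mono) (use agg_i in auto)
      also have "\<dots> = (\<Sum>j<m. (\<Sum>i<m. C \<nu> i j) * (phi \<nu> j * Uh j))"
        by (subst sum.swap) (simp add: sum_distrib_right mult.assoc)
      also have "\<dots> = (\<Sum>j<m. phi \<nu> j * Uh j)" using C_colstoch by simp
      finally show ?thesis .
    qed
    have per: "(\<Sum>j<m. phi \<nu> j * Uh j) \<le> sigma * p \<nu> + eta * (\<Sum>j<m. phi \<nu> j * e j)"
    proof -
      have "(\<Sum>j<m. phi \<nu> j * Uh j) \<le> (\<Sum>j<m. phi \<nu> j * (sigma * (U (x \<nu> j) - Ustar) + eta * e j))"
        by (rule sum_mono) (use agent ppos in \<open>auto simp: Uh_def e_def intro!: mult_left_mono less_imp_le\<close>)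
      also have "\<dots> = (\<Sum>j<m. sigma * (phi \<nu> j * (U (x \<nu> j) - Ustar)) + eta * (phi \<nu> j * e j))"
        by (rule sum.cong) (simp_all add: algebra_simps)
      also have "\<dots> = sigma * p \<nu> + eta * (\<Sum>j<m. phi \<nu> j * e j)"
        unfolding p_def by (simp only: sum.distrib sum_distrib_left)
      finally show ?thesis .
    qed
    have errsum: "(\<Sum>j<m. e j) \<le> 8 * Lmax\<^sup>2 * xperp2 \<nu> + 2 * yperp2 \<nu>"
    proof -
      have "(\<Sum>j<m. (norm ((1 / real m) *\<^sub>R (\<Sum>i<m. gf i (x \<nu> j)) - y \<nu> j))\<^sup>2)
         \<le> 8 * Lmax\<^sup>2 * (\<Sum>i<m. (norm (x \<nu> i - (1 / real m) *\<^sub>R (\<Sum>j<m. phi \<nu> j *\<^sub>R x \<nu> j)))\<^sup>2)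
           + 2 * (\<Sum>i<m. (norm (y \<nu> i - (1 / real m) *\<^sub>R (\<Sum>j<m. phi \<nu> j *\<^sub>R y \<nu> j)))\<^sup>2)"
      proof (rule err_sum[OF m_pos])
        fix i j assume i: "i < m" and j: "j < m"
        have "norm (gf i (x \<nu> j) - gf i (x \<nu> i)) \<le> Lf i * norm (x \<nu> j - x \<nu> i)"
          by (rule Lip[OF i xK[OF i] xK[OF j]])
        also have "\<dots> \<le> Lmax * norm (x \<nu> j - x \<nu> i)" using Lf_le[OF i] by (intro mult_right_mono) auto
        finally show "norm (gf i (x \<nu> j) - gf i (x \<nu> i)) \<le> Lmax * norm (x \<nu> j - x \<nu> i)" .
      next
        show "(1 / real m) *\<^sub>R (\<Sum>j<m. phi \<nu> j *\<^sub>R y \<nu> j) = (1 / real m) *\<^sub>R (\<Sum>i<m. gf i (x \<nu> i))"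
          using track by simp
      qed
      then show ?thesis unfolding xperp2_def yperp2_def by (simp add: e_def gF_def)
    qed
    have errb: "(\<Sum>j<m. phi \<nu> j * e j) \<le> phiub * (8 * Lmax\<^sup>2 * xperp2 \<nu> + 2 * yperp2 \<nu>)"
    proof (cases "m = 1")
      case True
      have lt: "{..<m} = {0}" using True by auto
      have "phi \<nu> 0 = 1" using psum[of \<nu>] by (simp add: lt True)
      moreover have "phi \<nu> 0 *\<^sub>R y \<nu> 0 = gf 0 (x \<nu> 0)" using track[of \<nu>] by (simp add: lt)
      ultimately have "e 0 = 0" by (simp add: e_def gF_def lt True)
      moreover have "phiub = 0" unfolding phiub_def using True by simp
      ultimately show ?thesis by (simp add: lt)
    next
      case False
      then have m2: "m \<ge> 2" using m_pos by simp
      have pb: "phi \<nu> j \<le> phiub" if j: "j < m" for j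
        unfolding phiub_def
        by (rule phi_bound[OF m2 B_pos B_conn cl_pos cl1 Cnn C_diag C_edge phi0 phi_step ppos psum j])
      have phiub_nn: "phiub \<ge> 0" using pb[OF m_pos] ppos[OF m_pos, of \<nu>] by simp
      have "(\<Sum>j<m. phi \<nu> j * e j) \<le> (\<Sum>j<m. phiub * e j)"
        by (rule sum_mono) (use pb in \<open>auto simp: e_def intro!: mult_right_mono\<close>)
      also have "\<dots> = phiub * (\<Sum>j<m. e j)" by (simp add: sum_distrib_left)
      also have "\<dots> \<le> phiub * (8 * Lmax\<^sup>2 * xperp2 \<nu> + 2 * yperp2 \<nu>)"
        using errsum phiub_nn by (rule mult_left_mono)
      finally show ?thesis .
    qed
    have "eta * (\<Sum>j<m. phi \<nu> j * e j) \<le> eta * (phiub * (8 * Lmax\<^sup>2 * xperp2 \<nu> + 2 * yperp2 \<nu>))"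
      using errb eta_nn by (rule mult_left_mono)
    then show "p (Suc \<nu>) \<le> sigma * p \<nu> + eta * phiub * (8 * Lmax\<^sup>2 * xperp2 \<nu> + 2 * yperp2 \<nu>)"
      using agg per by (simp add: mult.assoc)
  qed
qed


end
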